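(* Let $\eta>0$, $\alpha\in(1/2,1)$, $\eta_i=\eta i^{-\alpha}$, let $e_i$ be i.i.d. with $\mathbb{E}e_i=0$ and $\mathbb{E}e_i^4<\infty$, and let $X_0=x_0=0$, $X_i=(1-\eta_i)X_{i-1}+\eta_ie_i$ for $i\ge1$. Let $\ell_i=\lfloor Ci^{\alpha}\log i\rfloor$ with $\eta C>1$, $t_i=i-\ell_i+1$, $W_i=\sum_{j=t_i}^{i-1}X_j$, $$\widehat\sigma_n=\frac1n\sum_{i=1}^n\big[X_i^2+2X_iW_i\big],\qquad\sigma_n=\mathrm{Var}(\sqrt n\,\bar X_n),\ \bar X_n=n^{-1}\textstyle\sum_{i=1}^nX_i.$$ Then $\mathbb{E}[(\widehat\sigma_n-\sigma_n)^2]\lesssim n^{-1+\alpha}\log n$.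
   Context: $a_n\lesssim b_n$ means $a_n\le Cb_n$ with $C$ independent of $n$. *)

theory Defs
  imports "HOL-Probability.Probability"
begin

definition step :: "real \<Rightarrow> real \<Rightarrow> nat \<Rightarrow> real" where
  "step \<eta> \<alpha> i = \<eta> * real i powr (- \<alpha>)"

fun Xseq :: "real \<Rightarrow> real \<Rightarrow> (nat \<Rightarrow> 'a \<Rightarrow> real) \<Rightarrow> nat \<Rightarrow> 'a \<Rightarrow> real" where
  "Xseq \<eta> \<alpha> e 0 \<omega> = 0"
| "Xseq \<eta> \<alpha> e (Suc i) \<omega> =
     (1 - step \<eta> \<alpha> (Suc i)) * Xseq \<eta> \<alpha> e i \<omega> + step \<eta> \<alpha> (Suc i) * e (Suc i) \<omega>"

definition blen :: "real \<Rightarrow> real \<Rightarrow> nat \<Rightarrow> nat" where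
  "blen C \<alpha> i = nat \<lfloor>C * real i powr \<alpha> * ln (real i)\<rfloor>"

text \<open>W_i = sum_{j = t_i}^{i-1} X_j with t_i = i - ell_i + 1; indices below 0 are
  truncated (X_0 = 0, so including index 0 is harmless).\<close>
definition Wsum :: "real \<Rightarrow> real \<Rightarrow> real \<Rightarrow> (nat \<Rightarrow> 'a \<Rightarrow> real) \<Rightarrow> nat \<Rightarrow> 'a \<Rightarrow> real" where
  "Wsum \<eta> \<alpha> C e i \<omega> = (\<Sum>j\<in>{i + 1 - blen C \<alpha> i ..< i}. Xseq \<eta> \<alpha> e j \<omega>)"

definition sigma_hat :: "real \<Rightarrow> real \<Rightarrow> real \<Rightarrow> (nat \<Rightarrow> 'a \<Rightarrow> real) \<Rightarrow> nat \<Rightarrow> 'a \<Rightarrow> real" where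
  "sigma_hat \<eta> \<alpha> C e n \<omega> = (1 / real n) *
     (\<Sum>i=1..n. (Xseq \<eta> \<alpha> e i \<omega>)\<^sup>2 + 2 * Xseq \<eta> \<alpha> e i \<omega> * Wsum \<eta> \<alpha> C e i \<omega>)"

definition Xbar :: "real \<Rightarrow> real \<Rightarrow> (nat \<Rightarrow> 'a \<Rightarrow> real) \<Rightarrow> nat \<Rightarrow> 'a \<Rightarrow> real" where
  "Xbar \<eta> \<alpha> e n \<omega> = (1 / real n) * (\<Sum>i=1..n. Xseq \<eta> \<alpha> e i \<omega>)"

end

theory Submission
  imports Defs "HOL-Real_Asymp.Real_Asymp"
begin


locale sgd =
  fixes \<eta> \<alpha> C :: real
  assumes eta_pos: "\<eta> > 0" and alpha_gt: "1/2 < \<alpha>" and alpha_lt: "\<alpha> < 1"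
    and etaC: "\<eta> * C > 1"
begin

abbreviation s :: "nat \<Rightarrow> real" where "s m \<equiv> step \<eta> \<alpha> m"

lemma C_pos: "C > 0"
  using eta_pos etaC by (smt (verit) mult_nonneg_nonpos)

lemma s_eq: "s m = \<eta> * real m powr (-\<alpha>)" by (simp add: step_def)

lemma s_nonneg: "0 \<le> s m" using eta_pos by (simp add: step_def)

lemma s_pos: "1 \<le> m \<Longrightarrow> 0 < s m" using eta_pos by (simp add: step_def)

lemma s_le: "1 \<le> m \<Longrightarrow> s m \<le> \<eta>"
proof -
  assume m: "1 \<le> m"
  have "real m powr (-\<alpha>) \<le> real m powr 0"
    by (rule powr_mono) (use m alpha_gt in auto)
  then have "real m powr (-\<alpha>) \<le> 1" using m by simp
  then show ?thesis using eta_pos by (simp add: step_def mult_left_le)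
qed

lemma s_mono: "1 \<le> m \<Longrightarrow> m \<le> m' \<Longrightarrow> s m' \<le> s m"
proof -
  assume m: "1 \<le> m" "m \<le> m'"
  have "real m' powr (-\<alpha>) \<le> real m powr (-\<alpha>)"
    by (rule powr_mono2') (use m alpha_gt in auto)
  then show ?thesis using eta_pos by (simp add: step_def)
qed

definition S :: "nat \<Rightarrow> real" where "S i = (\<Sum>m\<in>{1..i}. s m)"

lemma S_diff: "k \<le> i \<Longrightarrow> S i - S k = (\<Sum>m\<in>{k<..i}. s m)"
proof -
  assume "k \<le> i"
  then have "{1..i} = {1..k} \<union> {k<..i}" by auto
  moreover have "{1..k} \<inter> {k<..i} = {}" by auto
  ultimately have "S i = S k + (\<Sum>m\<in>{k<..i}. s m)"
    unfolding S_def by (simp add: sum.union_disjoint)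
  then show ?thesis by simp
qed

lemma S_Suc: "S (Suc i) = S i + s (Suc i)"
  unfolding S_def by simp

lemma S_diff_lower: "k \<le> i \<Longrightarrow> (\<And>j. j \<in> {k<..i} \<Longrightarrow> m \<le> s j) \<Longrightarrow>
   real (i - k) * m \<le> S i - S k"
proof -
  assume a: "k \<le> i" "\<And>j. j \<in> {k<..i} \<Longrightarrow> m \<le> s j"
  have "real (card {k<..i}) * m \<le> (\<Sum>j\<in>{k<..i}. s j)"
    by (rule sum_bounded_below) (use a in auto)
  then show ?thesis using S_diff[OF a(1)] by simp
qed

lemma S_diff_lower': "k \<le> i \<Longrightarrow> real (i - k) * s i \<le> S i - S k"
proof -
  assume a: "k \<le> i"
  have "real (card {k<..i}) * s i \<le> (\<Sum>j\<in>{k<..i}. s j)"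
    by (rule sum_bounded_below) (auto intro: s_mono)
  then show ?thesis using S_diff[OF a] by simp
qed

definition c1 :: real where "c1 = \<eta> / (1 - exp (-\<eta>))"

lemma c1_pos: "c1 > 0"
  using eta_pos unfolding c1_def by (simp add: divide_pos_pos)

lemma conc: "0 \<le> x \<Longrightarrow> x \<le> \<eta> \<Longrightarrow> x \<le> c1 * (1 - exp (-x))"
proof -
  assume x: "0 \<le> x" "x \<le> \<eta>"
  define t where "t = x / \<eta>"
  have t: "0 \<le> t" "t \<le> 1" using x eta_pos by (auto simp: t_def)
  have "exp ((1 - t) *\<^sub>R 0 + t *\<^sub>R (-\<eta>)) \<le> (1 - t) * exp 0 + t * exp (-\<eta>)"
    by (rule convex_onD[OF exp_convex t]) auto
  moreover have "t * \<eta> = x" using eta_pos by (simp add: t_def)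
  ultimately have "exp (-x) \<le> 1 - t * (1 - exp (-\<eta>))"
    by (simp add: algebra_simps)
  then have "t * (1 - exp (-\<eta>)) \<le> 1 - exp (-x)" by simp
  moreover have "1 - exp (-\<eta>) > 0" using eta_pos by simp
  ultimately have "x / \<eta> \<le> (1 - exp (-x)) / (1 - exp (-\<eta>))"
    by (simp add: t_def pos_le_divide_eq)
  then show ?thesis using eta_pos \<open>1 - exp (-\<eta>) > 0\<close>
    unfolding c1_def by (simp add: field_simps)
qed

lemma sum_le_support:
  fixes f :: "'b \<Rightarrow> real"
  assumes "finite A" "finite B" "\<And>k. k \<notin> B \<Longrightarrow> f k = 0" "\<And>k. 0 \<le> f k"
  shows "sum f A \<le> sum f B"
proof -
  have "sum f A = sum f (A \<inter> B)"
    by (rule sum.mono_neutral_right) (use assms in auto)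
  also have "\<dots> \<le> sum f B"
    by (rule sum_mono2) (use assms in auto)
  finally show ?thesis .
qed

lemma geom_shift:
  fixes r :: real
  shows "(\<Sum>i<n. (if k \<le> i then r ^ (i - k) else 0)) * (1 - r) = 1 - r ^ (n - k)"
proof (induction n)
  case 0 then show ?case by simp
next
  case (Suc n)
  show ?case
  proof (cases "k \<le> n")
    case True
    then have e: "Suc n - k = Suc (n - k)" by simp
    have "(\<Sum>i<Suc n. (if k \<le> i then r ^ (i - k) else 0)) * (1 - r)
        = (\<Sum>i<n. (if k \<le> i then r ^ (i - k) else 0)) * (1 - r) + r ^ (n - k) * (1 - r)"
      using True by (simp add: algebra_simps)
    also have "\<dots> = 1 - r ^ (n - k) + r ^ (n - k) * (1 - r)" by (simp only: Suc.IH)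
    also have "\<dots> = 1 - r ^ (Suc n - k)" unfolding e by (simp add: algebra_simps)
    finally show ?thesis .
  next
    case False
    then have "Suc n - k = 0" by simp
    then show ?thesis using Suc False by simp
  qed
qed

lemma S_mono: "k \<le> i \<Longrightarrow> S k \<le> S i"
proof -
  assume "k \<le> i"
  have "0 \<le> sum s {k<..i}" by (rule sum_nonneg) (rule s_nonneg)
  then show ?thesis using S_diff[OF \<open>k \<le> i\<close>] by simp
qed

definition a :: "nat \<Rightarrow> nat \<Rightarrow> real" where
  "a i k = (if 1 \<le> k \<and> k \<le> i then s k * (\<Prod>m\<in>{k<..i}. 1 - s m) else 0)"

definition p :: "nat \<Rightarrow> nat \<Rightarrow> real" where
  "p i k = (if 1 \<le> k \<and> k \<le> i then s k * exp (-(S i - S k)) else 0)"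

definition N0 :: nat where "N0 = nat \<lceil>\<eta> powr (1/\<alpha>)\<rceil>"
definition g :: "nat \<Rightarrow> real" where "g m = \<bar>1 - s m\<bar> * exp (s m)"
definition K0 :: real where "K0 = (\<Prod>m\<in>{..N0}. max 1 (g m))"

lemma K0_ge1: "1 \<le> K0"
  unfolding K0_def by (rule prod_ge_1) auto

lemma s_le1: "N0 < m \<Longrightarrow> s m \<le> 1"
proof -
  assume m: "N0 < m"
  have "\<eta> powr (1/\<alpha>) \<le> real N0" unfolding N0_def by linarith
  then have h: "\<eta> powr (1/\<alpha>) \<le> real m" using m by linarith
  have "(\<eta> powr (1/\<alpha>)) powr \<alpha> \<le> real m powr \<alpha>"
    by (rule powr_mono2) (use h alpha_gt in auto)
  moreover have "(\<eta> powr (1/\<alpha>)) powr \<alpha> = \<eta>"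
    using eta_pos alpha_gt by (simp add: powr_powr)
  ultimately have "\<eta> \<le> real m powr \<alpha>" by simp
  moreover have "real m powr \<alpha> > 0" using m by simp
  ultimately show ?thesis by (simp add: step_def powr_minus divide_inverse[symmetric])
qed

lemma g_nonneg: "0 \<le> g m" unfolding g_def by simp

lemma g_le1: "N0 < m \<Longrightarrow> g m \<le> 1"
proof -
  assume m: "N0 < m"
  have "1 + (- s m) \<le> exp (- s m)" by (rule exp_ge_add_one_self)
  then have "\<bar>1 - s m\<bar> \<le> exp (- s m)" using s_le1[OF m] s_nonneg[of m] by simp
  from mult_right_mono[OF this, of "exp (s m)"]
  have "\<bar>1 - s m\<bar> * exp (s m) \<le> exp (- s m) * exp (s m)" by simp
  also have "exp (- s m) * exp (s m) = 1" by (simp add: exp_add[symmetric])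
  finally show ?thesis unfolding g_def .
qed

lemma prod_g: "finite A \<Longrightarrow> (\<Prod>m\<in>A. g m) \<le> K0"
proof -
  assume A: "finite A"
  define h where "h m = (if m \<le> N0 then max 1 (g m) else 1)" for m
  have "(\<Prod>m\<in>A. g m) \<le> (\<Prod>m\<in>A. h m)"
    by (rule prod_mono) (auto simp: h_def g_nonneg g_le1)
  also have "(\<Prod>m\<in>A. h m) = (\<Prod>m\<in>A \<inter> {..N0}. h m)"
    by (rule prod.mono_neutral_right) (use A in \<open>auto simp: h_def\<close>)
  also have "\<dots> \<le> (\<Prod>m\<in>{..N0}. h m)"
    by (rule prod_mono2) (auto simp: h_def)
  also have "\<dots> = K0" unfolding K0_def h_def by simp
  finally show ?thesis .
qed

lemma a_bound: "\<bar>a i k\<bar> \<le> K0 * p i k"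
proof (cases "1 \<le> k \<and> k \<le> i")
  case T: True
  have eq: "\<bar>1 - s m\<bar> = g m * exp (- s m)" for m
    unfolding g_def by (simp add: exp_minus_inverse)
  have "\<bar>a i k\<bar> = s k * (\<Prod>m\<in>{k<..i}. \<bar>1 - s m\<bar>)"
    using T s_nonneg[of k] by (simp add: a_def abs_mult abs_prod)
  also have "(\<Prod>m\<in>{k<..i}. \<bar>1 - s m\<bar>) = (\<Prod>m\<in>{k<..i}. g m) * (\<Prod>m\<in>{k<..i}. exp (- s m))"
    unfolding eq by (simp add: prod.distrib)
  also have "(\<Prod>m\<in>{k<..i}. exp (- s m)) = exp (-(S i - S k))"
    using T by (simp add: S_diff exp_sum[symmetric] sum_negf)
  finally have "\<bar>a i k\<bar> = s k * ((\<Prod>m\<in>{k<..i}. g m) * exp (-(S i - S k)))" .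
  also have "\<dots> \<le> s k * (K0 * exp (-(S i - S k)))"
    by (intro mult_left_mono mult_right_mono prod_g s_nonneg) auto
  finally have X: "\<bar>a i k\<bar> \<le> s k * (K0 * exp (-(S i - S k)))" .
  have "p i k = s k * exp (-(S i - S k))" using T by (simp add: p_def)
  then show ?thesis using X by (metis mult.left_commute)
next
  case False then show ?thesis by (auto simp: a_def p_def)
qed

lemma p_nonneg: "0 \<le> p i k" unfolding p_def using s_nonneg by simp

lemma p_le_s: "p i k \<le> s k"
proof -
  have "k \<le> i \<Longrightarrow> exp (-(S i - S k)) \<le> 1" using S_mono[of k i] by simp
  then show ?thesis unfolding p_def using s_nonneg[of k]
    by (auto intro: mult_left_le)
qed

lemma p_le_eta: "p i k \<le> \<eta>"
  using p_le_s[of i k] s_le[of k] p_nonneg[of i k] eta_pos by (cases "1 \<le> k") (auto simp: p_def)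

lemma p_factor: "j \<le> i \<Longrightarrow> p i k * p j k = exp (-(S i - S j)) * (p j k)^2"
proof -
  assume ji: "j \<le> i"
  show ?thesis
  proof (cases "1 \<le> k \<and> k \<le> j")
    case T: True
    have e: "exp (-(S i - S k)) = exp (-(S i - S j)) * exp (-(S j - S k))"
      by (simp add: exp_add[symmetric])
    have pi: "p i k = s k * exp (-(S i - S k))" using T ji by (simp add: p_def)
    have pj: "p j k = s k * exp (-(S j - S k))" using T by (simp add: p_def)
    show ?thesis unfolding pi pj e by (simp add: power2_eq_square mult_ac)
  next
    case False then show ?thesis by (auto simp: p_def)
  qed
qed

lemma row_tele: "(\<Sum>k\<in>{1..i}. s k * exp (S k)) \<le> c1 * (exp (S i) - 1)"
proof (induction i)
  case 0 then show ?case by (simp add: S_def)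
next
  case (Suc i)
  have "s (Suc i) \<le> c1 * (1 - exp (- s (Suc i)))"
    by (rule conc) (auto intro: s_nonneg s_le)
  then have "s (Suc i) * exp (S (Suc i)) \<le> c1 * (1 - exp (- s (Suc i))) * exp (S (Suc i))"
    by (rule mult_right_mono) simp
  also have "\<dots> = c1 * (exp (S (Suc i)) - exp (S i))"
    by (simp add: S_Suc algebra_simps exp_add[symmetric] exp_diff)
  finally show ?case using Suc by (simp add: algebra_simps)
qed

lemma row_sum: "finite A \<Longrightarrow> (\<Sum>k\<in>A. p i k) \<le> c1"
proof -
  assume A: "finite A"
  have "(\<Sum>k\<in>A. p i k) \<le> (\<Sum>k\<in>{1..i}. p i k)"
    by (rule sum_le_support) (use A in \<open>auto simp: p_def p_nonneg intro!: mult_nonneg_nonneg s_nonneg\<close>)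
  also have "\<dots> = (\<Sum>k\<in>{1..i}. exp (- S i) * (s k * exp (S k)))"
    by (rule sum.cong) (auto simp: p_def exp_diff exp_minus field_simps)
  also have "\<dots> = exp (- S i) * (\<Sum>k\<in>{1..i}. s k * exp (S k))"
    by (simp add: sum_distrib_left)
  also have "\<dots> \<le> exp (- S i) * (c1 * (exp (S i) - 1))"
    by (rule mult_left_mono[OF row_tele]) simp
  also have "\<dots> \<le> c1" using c1_pos
    by (simp add: algebra_simps exp_minus_inverse)
  finally show ?thesis .
qed

definition fcol :: "nat \<Rightarrow> real" where "fcol i = exp (-((\<eta>/2) * real i powr (1-\<alpha>)))"

lemma fcol_nonneg: "0 \<le> fcol i" unfolding fcol_def by simp

lemma fcol_summable: "summable fcol"
proof -
  have h1: "\<eta>/2 > 0" using eta_pos by simp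
  have h2: "1 - \<alpha> > 0" using alpha_lt by simp
  have O: "fcol \<in> O(\<lambda>n. 1 / real n ^ 2)" unfolding fcol_def using h1 h2 by real_asymp
  have S: "summable (\<lambda>n. norm (1 / real n ^ 2 :: real))"
    using inverse_power_summable[of 2, where ?'a = real] by (simp add: divide_inverse)
  show ?thesis by (rule summable_comparison_test_bigo[OF S O])
qed

definition Cc :: real where "Cc = 2 * c1 + \<eta> * suminf fcol"

lemma s_double: "1 \<le> k \<Longrightarrow> s k / 2 \<le> s (2*k)"
proof -
  assume k: "1 \<le> k"
  have "real (2*k) powr (-\<alpha>) = 2 powr (-\<alpha>) * real k powr (-\<alpha>)"
    by (simp add: powr_mult)
  moreover have "2 powr (-1) \<le> (2::real) powr (-\<alpha>)"
    by (rule powr_mono) (use alpha_lt in auto)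
  moreover have "(2::real) powr (-1) = 1/2" by (simp add: powr_minus)
  ultimately have "1 \<le> 2 * 2 powr (-\<alpha>)" by simp
  from mult_right_mono[OF this, of "real k powr (-\<alpha>)"]
  have "real k powr (-\<alpha>) \<le> 2 * (2 powr (-\<alpha>) * real k powr (-\<alpha>))" by simp
  then have "real k powr (-\<alpha>) / 2 \<le> real (2*k) powr (-\<alpha>)"
    using \<open>real (2*k) powr (-\<alpha>) = 2 powr (-\<alpha>) * real k powr (-\<alpha>)\<close> by simp
  then show ?thesis using eta_pos by (simp add: step_def)
qed

lemma exp_nat_mult: "exp (- (real n * x)) = exp (- x) ^ n"
  by (simp add: exp_of_nat_mult[symmetric])

lemma col_term:
  assumes k: "1 \<le> k"
  shows "p i k \<le> s k * (if k \<le> i then exp (- (s k / 2)) ^ (i - k) else 0) + \<eta> * fcol i"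
proof -
  have fnn: "0 \<le> \<eta> * fcol i" using eta_pos fcol_nonneg[of i] by simp
  consider "i < k" | "k \<le> i" "i \<le> 2*k" | "2*k < i" by linarith
  then show ?thesis
  proof cases
    case 1 then show ?thesis using fnn by (simp add: p_def)
  next
    case 2
    have "real (i - k) * (s k / 2) \<le> S i - S k"
    proof (rule S_diff_lower[OF 2(1)])
      fix j assume "j \<in> {k<..i}"
      then have "s (2*k) \<le> s j" using 2 by (intro s_mono) auto
      then show "s k / 2 \<le> s j" using s_double[OF k] by linarith
    qed
    then have "exp (-(S i - S k)) \<le> exp (- (real (i - k) * (s k / 2)))" by simp
    also have "\<dots> = exp (- (s k / 2)) ^ (i - k)" by (rule exp_nat_mult)
    finally have "s k * exp (-(S i - S k)) \<le> s k * exp (- (s k / 2)) ^ (i - k)"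
      by (rule mult_left_mono) (rule s_nonneg)
    then show ?thesis using 2 k fnn by (simp add: p_def)
  next
    case 3
    have ip: "real i > 0" using 3 by simp
    have "real (i - k) * s i \<le> S i - S k" using 3 by (intro S_diff_lower') auto
    moreover have "(\<eta>/2) * real i powr (1-\<alpha>) \<le> real (i - k) * s i"
    proof -
      have "real i powr (1-\<alpha>) = real i * real i powr (-\<alpha>)"
      proof -
        have "real i powr (1 + -\<alpha>) = real i powr 1 * real i powr (-\<alpha>)" by (rule powr_add)
        then show ?thesis using ip by simp
      qed
      moreover have "real i / 2 \<le> real (i - k)" using 3 by linarith
      moreover have "0 \<le> \<eta> * real i powr (-\<alpha>)" using eta_pos by simp
      ultimately have "(real i / 2) * (\<eta> * real i powr (-\<alpha>)) \<le> real (i - k) * (\<eta> * real i powr (-\<alpha>))"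
        by (intro mult_right_mono) auto
      moreover have "(\<eta>/2) * real i powr (1-\<alpha>) = (real i / 2) * (\<eta> * real i powr (-\<alpha>))"
        using \<open>real i powr (1-\<alpha>) = real i * real i powr (-\<alpha>)\<close> by simp
      ultimately show ?thesis unfolding s_eq[of i] by linarith
    qed
    ultimately have "exp (-(S i - S k)) \<le> fcol i" unfolding fcol_def by simp
    then have "s k * exp (-(S i - S k)) \<le> \<eta> * fcol i"
      using s_le[OF k] s_nonneg[of k] fcol_nonneg[of i] by (intro mult_mono) auto
    moreover have "0 \<le> s k * exp (- (s k / 2)) ^ (i - k)" using s_nonneg[of k] by simp
    ultimately show ?thesis using 3 k by (simp add: p_def)
  qed
qed

lemma col_sum:
  assumes k: "1 \<le> k"
  shows "(\<Sum>i\<in>{1..n}. p i k) \<le> Cc"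
proof -
  define r where "r = exp (- (s k / 2))"
  have r: "0 \<le> r" "r < 1" using s_pos[OF k] by (auto simp: r_def)
  define G where "G i = (if k \<le> i then r ^ (i - k) else 0)" for i
  have G: "0 \<le> G i" for i using r by (simp add: G_def)
  have "(\<Sum>i\<in>{1..n}. p i k) \<le> (\<Sum>i\<in>{1..n}. s k * G i + \<eta> * fcol i)"
    by (rule sum_mono) (unfold G_def r_def, rule col_term[OF k])
  also have "\<dots> = s k * (\<Sum>i\<in>{1..n}. G i) + \<eta> * (\<Sum>i\<in>{1..n}. fcol i)"
    by (simp add: sum.distrib sum_distrib_left)
  also have "(\<Sum>i\<in>{1..n}. G i) \<le> (\<Sum>i<Suc n. G i)"
    by (rule sum_mono2) (auto simp: G)
  also have "(\<Sum>i<Suc n. G i) \<le> 1 / (1 - r)"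
  proof -
    have "(\<Sum>i<Suc n. G i) * (1 - r) = 1 - r ^ (Suc n - k)"
      unfolding G_def by (rule geom_shift)
    also have "\<dots> \<le> 1" using r by simp
    finally show ?thesis using r by (simp add: pos_le_divide_eq)
  qed
  also have "(\<Sum>i\<in>{1..n}. fcol i) \<le> suminf fcol"
    by (rule sum_le_suminf) (auto simp: fcol_summable fcol_nonneg)
  finally have A: "(\<Sum>i\<in>{1..n}. p i k) \<le> s k * (1 / (1 - r)) + \<eta> * suminf fcol"
    using s_nonneg[of k] eta_pos by (simp add: mult_left_mono)
  have "s k / 2 \<le> c1 * (1 - r)" unfolding r_def
    by (rule conc) (use s_nonneg[of k] s_le[OF k] eta_pos in auto)
  then have "s k * (1 / (1 - r)) \<le> 2 * c1" using r by (simp add: field_simps)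
  then show ?thesis using A unfolding Cc_def by linarith
qed

end



lemma weighted_cs:
  fixes w x :: "nat \<Rightarrow> real"
  assumes nn: "\<And>i. i \<in> I \<Longrightarrow> 0 \<le> w i"
  shows "(\<Sum>i\<in>I. w i * x i)^2 \<le> (\<Sum>i\<in>I. w i) * (\<Sum>i\<in>I. w i * (x i)^2)"
proof -
  have "(\<Sum>i\<in>I. w i * x i) = (\<Sum>i\<in>I. sqrt (w i) * (sqrt (w i) * x i))"
    by (rule sum.cong) (auto simp: nn mult.assoc[symmetric] real_sqrt_mult_self)
  moreover have "(\<Sum>i\<in>I. w i) = (\<Sum>i\<in>I. (sqrt (w i))^2)"
    by (rule sum.cong) (auto simp: nn)
  moreover have "(\<Sum>i\<in>I. w i * (x i)^2) = (\<Sum>i\<in>I. (sqrt (w i) * x i)^2)"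
    by (rule sum.cong) (auto simp: nn power_mult_distrib)
  ultimately show ?thesis using Cauchy_Schwarz_ineq_sum by metis
qed

lemma schur:
  fixes Mx :: "nat \<Rightarrow> nat \<Rightarrow> real" and v :: "nat \<Rightarrow> real"
  assumes nn: "\<And>i k. 0 \<le> Mx i k"
    and row: "\<And>i. i \<in> I \<Longrightarrow> (\<Sum>k\<in>K. Mx i k) \<le> R"
    and col: "\<And>k. k \<in> K \<Longrightarrow> (\<Sum>i\<in>I. Mx i k) \<le> Cc" and Cc: "0 \<le> Cc"
  shows "(\<Sum>k\<in>K. (\<Sum>i\<in>I. Mx i k * v i)^2) \<le> R * Cc * (\<Sum>i\<in>I. (v i)^2)"
proof -
  have "(\<Sum>k\<in>K. (\<Sum>i\<in>I. Mx i k * v i)^2) \<le> (\<Sum>k\<in>K. Cc * (\<Sum>i\<in>I. Mx i k * (v i)^2))"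
  proof (rule sum_mono)
    fix k assume k: "k \<in> K"
    have "(\<Sum>i\<in>I. Mx i k * v i)^2 \<le> (\<Sum>i\<in>I. Mx i k) * (\<Sum>i\<in>I. Mx i k * (v i)^2)"
      by (rule weighted_cs) (rule nn)
    also have "\<dots> \<le> Cc * (\<Sum>i\<in>I. Mx i k * (v i)^2)"
      by (rule mult_right_mono[OF col[OF k]]) (intro sum_nonneg, simp add: nn)
    finally show "(\<Sum>i\<in>I. Mx i k * v i)^2 \<le> Cc * (\<Sum>i\<in>I. Mx i k * (v i)^2)" .
  qed
  also have "(\<Sum>k\<in>K. Cc * (\<Sum>i\<in>I. Mx i k * (v i)^2)) = Cc * (\<Sum>k\<in>K. \<Sum>i\<in>I. Mx i k * (v i)^2)"
    by (simp add: sum_distrib_left)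
  also have "(\<Sum>k\<in>K. \<Sum>i\<in>I. Mx i k * (v i)^2) = (\<Sum>i\<in>I. \<Sum>k\<in>K. Mx i k * (v i)^2)"
    by (rule sum.swap)
  also have "\<dots> = (\<Sum>i\<in>I. (v i)^2 * (\<Sum>k\<in>K. Mx i k))"
    by (simp add: sum_distrib_right mult_ac)
  also have "Cc * \<dots> \<le> Cc * (\<Sum>i\<in>I. (v i)^2 * R)"
    by (intro mult_left_mono sum_mono Cc) (auto intro: mult_left_mono row)
  also have "\<dots> = R * Cc * (\<Sum>i\<in>I. (v i)^2)"
    by (simp add: sum_distrib_left sum_distrib_right mult_ac)
  finally show ?thesis .
qed

context sgd
begin

definition win :: "nat \<Rightarrow> nat set" where "win i = {i + 1 - blen C \<alpha> i ..< i}"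
definition Bm :: "nat \<Rightarrow> nat \<Rightarrow> real" where
  "Bm i j = (if j = i then 1 else if j \<in> win i then 2 else 0)"
definition bm :: "nat \<Rightarrow> nat \<Rightarrow> real" where
  "bm i j = (if j = i \<or> j \<in> win i then 1 else 0)"
definition q :: "nat \<Rightarrow> nat \<Rightarrow> nat \<Rightarrow> real" where
  "q n k l = (1 / real n) * (\<Sum>i\<in>{1..n}. \<Sum>j\<in>{1..n}. Bm i j * a i k * a j l)"
definition Qp :: "nat \<Rightarrow> nat \<Rightarrow> nat \<Rightarrow> real" where
  "Qp n k l = (\<Sum>i\<in>{1..n}. \<Sum>j\<in>{1..n}. p i k * bm i j * p j l)"

lemma win_sub: "win i \<subseteq> {..<i}" by (auto simp: win_def)

lemma Bm_le: "\<bar>Bm i j\<bar> \<le> 2 * bm i j" by (simp add: Bm_def bm_def)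

lemma bm_nonneg: "0 \<le> bm i j" by (simp add: bm_def)

lemma Cc_nonneg: "0 \<le> Cc"
  unfolding Cc_def using c1_pos eta_pos suminf_nonneg[OF fcol_summable fcol_nonneg] by simp

lemma q_abs: "1 \<le> n \<Longrightarrow> \<bar>q n k l\<bar> \<le> 2 * K0^2 / real n * Qp n k l"
proof -
  assume n: "1 \<le> n"
  have "\<bar>\<Sum>i\<in>{1..n}. \<Sum>j\<in>{1..n}. Bm i j * a i k * a j l\<bar>
      \<le> (\<Sum>i\<in>{1..n}. \<Sum>j\<in>{1..n}. \<bar>Bm i j * a i k * a j l\<bar>)"
    by (rule order_trans[OF sum_abs sum_mono]) (rule sum_abs)
  also have "\<dots> \<le> (\<Sum>i\<in>{1..n}. \<Sum>j\<in>{1..n}. 2 * K0^2 * (p i k * bm i j * p j l))"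
  proof (intro sum_mono)
    fix i j
    have "\<bar>Bm i j * a i k * a j l\<bar> = \<bar>Bm i j\<bar> * \<bar>a i k\<bar> * \<bar>a j l\<bar>" by (simp add: abs_mult)
    also have "\<dots> \<le> (2 * bm i j) * (K0 * p i k) * (K0 * p j l)"
      by (intro mult_mono Bm_le a_bound) (auto intro!: mult_nonneg_nonneg bm_nonneg p_nonneg simp: K0_ge1 order_trans[OF zero_le_one K0_ge1])
    also have "\<dots> = 2 * K0^2 * (p i k * bm i j * p j l)" by (simp add: power2_eq_square mult_ac)
    finally show "\<bar>Bm i j * a i k * a j l\<bar> \<le> 2 * K0^2 * (p i k * bm i j * p j l)" .
  qed
  also have "\<dots> = 2 * K0^2 * Qp n k l" by (simp add: Qp_def sum_distrib_left)
  finally have "\<bar>\<Sum>i\<in>{1..n}. \<Sum>j\<in>{1..n}. Bm i j * a i k * a j l\<bar> \<le> 2 * K0^2 * Qp n k l" .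
  then show ?thesis using n unfolding q_def by (simp add: abs_mult divide_right_mono)
qed

lemma Qp_nonneg: "0 \<le> Qp n k l"
  unfolding Qp_def by (intro sum_nonneg mult_nonneg_nonneg p_nonneg bm_nonneg)

lemma Qp_frob:
  "(\<Sum>k\<in>{1..n}. \<Sum>l\<in>{1..n}. (Qp n k l)^2) \<le> (c1 * Cc)^2 * (\<Sum>i\<in>{1..n}. \<Sum>j\<in>{1..n}. (bm i j)^2)"
proof -
  define T where "T i l = (\<Sum>j\<in>{1..n}. p j l * bm i j)" for i l
  have Q: "Qp n k l = (\<Sum>i\<in>{1..n}. p i k * T i l)" for k l
    unfolding Qp_def T_def by (simp add: sum_distrib_left mult_ac)
  have rs: "\<And>i. i \<in> {1..n} \<Longrightarrow> (\<Sum>k\<in>{1..n}. p i k) \<le> c1" by (rule row_sum) simp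
  have cs: "\<And>k. k \<in> {1..n} \<Longrightarrow> (\<Sum>i\<in>{1..n}. p i k) \<le> Cc" by (rule col_sum) simp
  have "(\<Sum>k\<in>{1..n}. \<Sum>l\<in>{1..n}. (Qp n k l)^2) = (\<Sum>l\<in>{1..n}. \<Sum>k\<in>{1..n}. (\<Sum>i\<in>{1..n}. p i k * T i l)^2)"
    unfolding Q by (rule sum.swap)
  also have "\<dots> \<le> (\<Sum>l\<in>{1..n}. c1 * Cc * (\<Sum>i\<in>{1..n}. (T i l)^2))"
    by (intro sum_mono schur[OF p_nonneg rs cs Cc_nonneg])
  also have "\<dots> = c1 * Cc * (\<Sum>l\<in>{1..n}. \<Sum>i\<in>{1..n}. (T i l)^2)"
    by (simp add: sum_distrib_left)
  also have "(\<Sum>l\<in>{1..n}. \<Sum>i\<in>{1..n}. (T i l)^2) = (\<Sum>i\<in>{1..n}. \<Sum>l\<in>{1..n}. (\<Sum>j\<in>{1..n}. p j l * bm i j)^2)"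
    unfolding T_def by (rule sum.swap)
  also have "c1 * Cc * (\<Sum>i\<in>{1..n}. \<Sum>l\<in>{1..n}. (\<Sum>j\<in>{1..n}. p j l * bm i j)^2) \<le> c1 * Cc * (\<Sum>i\<in>{1..n}. c1 * Cc * (\<Sum>j\<in>{1..n}. (bm i j)^2))"
    by (intro mult_left_mono sum_mono schur[OF p_nonneg rs cs Cc_nonneg])
       (use c1_pos Cc_nonneg in auto)
  also have "\<dots> = (c1 * Cc)^2 * (\<Sum>i\<in>{1..n}. \<Sum>j\<in>{1..n}. (bm i j)^2)"
    by (simp add: sum_distrib_left power2_eq_square mult_ac)
  finally show ?thesis .
qed

lemma card_win: "card (win i) \<le> blen C \<alpha> i"
  unfolding win_def by simp

lemma bm_sum: "(\<Sum>j\<in>{1..n}. (bm i j)^2) \<le> 1 + real (blen C \<alpha> i)"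
proof -
  have "(\<Sum>j\<in>{1..n}. (bm i j)^2) \<le> (\<Sum>j\<in>insert i (win i). (bm i j)^2)"
    by (rule sum_le_support) (auto simp: bm_def win_def)
  also have "\<dots> \<le> (\<Sum>j\<in>insert i (win i). 1)"
    by (rule sum_mono) (simp add: bm_def)
  also have "\<dots> = real (card (insert i (win i)))" by simp
  also have "\<dots> \<le> 1 + real (card (win i))"
    using card_insert_le_m1 by (simp add: card_insert_if win_def)
  also have "\<dots> \<le> 1 + real (blen C \<alpha> i)" using card_win[of i] by simp
  finally show ?thesis .
qed

lemma blen_arg_nonneg: "1 \<le> i \<Longrightarrow> 0 \<le> C * real i powr \<alpha> * ln (real i)"
  using C_pos by simp

lemma blen_le: "1 \<le> i \<Longrightarrow> i \<le> n \<Longrightarrow> real (blen C \<alpha> i) \<le> C * real n powr \<alpha> * ln (real n)"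
proof -
  assume i: "1 \<le> i" "i \<le> n"
  have "real (blen C \<alpha> i) \<le> C * real i powr \<alpha> * ln (real i)"
    unfolding blen_def using blen_arg_nonneg[OF i(1)] by linarith
  also have "\<dots> \<le> C * real n powr \<alpha> * ln (real n)"
  proof (intro mult_mono mult_left_mono)
    show "real i powr \<alpha> \<le> real n powr \<alpha>" by (rule powr_mono2) (use i alpha_gt in auto)
    show "ln (real i) \<le> ln (real n)" using i by simp
  qed (use C_pos i in auto)
  finally show ?thesis .
qed

lemma blen_ge: "1 \<le> i \<Longrightarrow> C * real i powr \<alpha> * ln (real i) - 1 \<le> real (blen C \<alpha> i)"
  unfolding blen_def using blen_arg_nonneg[of i] by linarith

definition Kq :: real where "Kq = 4 * K0^4 * (c1 * Cc)^2"

lemma q_frob: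
  assumes n: "1 \<le> n"
  shows "(\<Sum>k\<in>{1..n}. \<Sum>l\<in>{1..n}. (q n k l)^2) \<le> Kq * (1 / real n + C * real n powr (\<alpha> - 1) * ln (real n))"
proof -
  have np: "real n > 0" using n by simp
  have "(\<Sum>k\<in>{1..n}. \<Sum>l\<in>{1..n}. (q n k l)^2) \<le> (\<Sum>k\<in>{1..n}. \<Sum>l\<in>{1..n}. (2 * K0^2 / real n)^2 * (Qp n k l)^2)"
  proof (intro sum_mono)
    fix k l
    have "\<bar>q n k l\<bar> \<le> 2 * K0^2 / real n * Qp n k l" by (rule q_abs[OF n])
    then have "\<bar>q n k l\<bar>^2 \<le> (2 * K0^2 / real n * Qp n k l)^2"
      by (rule power_mono) simp
    then show "(q n k l)^2 \<le> (2 * K0^2 / real n)^2 * (Qp n k l)^2"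
      by (simp only: power2_abs power_mult_distrib)
  qed
  also have "\<dots> = (2 * K0^2 / real n)^2 * (\<Sum>k\<in>{1..n}. \<Sum>l\<in>{1..n}. (Qp n k l)^2)"
    by (simp add: sum_distrib_left)
  also have "\<dots> \<le> (2 * K0^2 / real n)^2 * ((c1 * Cc)^2 * (\<Sum>i\<in>{1..n}. \<Sum>j\<in>{1..n}. (bm i j)^2))"
    by (intro mult_left_mono Qp_frob) simp
  also have "(\<Sum>i\<in>{1..n}. \<Sum>j\<in>{1..n}. (bm i j)^2) \<le> (\<Sum>i\<in>{1..n}. 1 + C * real n powr \<alpha> * ln (real n))"
    by (intro sum_mono order_trans[OF bm_sum]) (use blen_le in auto)
  also have "\<dots> = real n * (1 + C * real n powr \<alpha> * ln (real n))" by simp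
  finally have A: "(\<Sum>k\<in>{1..n}. \<Sum>l\<in>{1..n}. (q n k l)^2) \<le> (2 * K0^2 / real n)^2 * ((c1 * Cc)^2 * (real n * (1 + C * real n powr \<alpha> * ln (real n))))"
    by (simp add: mult_left_mono)
  have pw: "real n powr \<alpha> / real n = real n powr (\<alpha> - 1)"
    using np by (simp add: powr_diff)
  have "(2 * K0^2 / real n)^2 * ((c1 * Cc)^2 * (real n * (1 + C * real n powr \<alpha> * ln (real n))))
      = Kq * (1 / real n + C * (real n powr \<alpha> / real n) * ln (real n))"
    using np unfolding Kq_def by (simp add: field_simps power2_eq_square eval_nat_numeral)
  then show ?thesis using A unfolding pw by simp
qed

definition G :: "nat \<Rightarrow> nat \<Rightarrow> nat \<Rightarrow> real" where
  "G n i j = (\<Sum>k\<in>{1..n}. a i k * a j k)"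

lemma G_sym: "G n i j = G n j i" unfolding G_def by (simp add: mult.commute)

lemma G_bound: "j \<le> i \<Longrightarrow> \<bar>G n i j\<bar> \<le> K0^2 * \<eta> * c1 * exp (-(S i - S j))"
proof -
  assume ji: "j \<le> i"
  have "\<bar>G n i j\<bar> \<le> (\<Sum>k\<in>{1..n}. \<bar>a i k\<bar> * \<bar>a j k\<bar>)"
    unfolding G_def by (rule order_trans[OF sum_abs]) (simp add: abs_mult)
  also have "\<dots> \<le> (\<Sum>k\<in>{1..n}. (K0 * p i k) * (K0 * p j k))"
    by (intro sum_mono mult_mono a_bound) (auto intro!: mult_nonneg_nonneg p_nonneg order_trans[OF zero_le_one K0_ge1])
  also have "\<dots> = K0^2 * exp (-(S i - S j)) * (\<Sum>k\<in>{1..n}. (p j k)^2)"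
    by (simp add: sum_distrib_left power2_eq_square mult_ac p_factor[OF ji, simplified power2_eq_square])
  finally have A: "\<bar>G n i j\<bar> \<le> K0^2 * exp (-(S i - S j)) * (\<Sum>k\<in>{1..n}. (p j k)^2)" .
  have "(\<Sum>k\<in>{1..n}. (p j k)^2) \<le> (\<Sum>k\<in>{1..n}. \<eta> * p j k)"
    by (intro sum_mono) (simp add: power2_eq_square mult_right_mono p_le_eta p_nonneg)
  also have "\<dots> = \<eta> * (\<Sum>k\<in>{1..n}. p j k)" by (simp add: sum_distrib_left)
  also have "\<dots> \<le> \<eta> * c1" by (intro mult_left_mono row_sum) (use eta_pos in auto)
  finally have B: "(\<Sum>k\<in>{1..n}. (p j k)^2) \<le> \<eta> * c1" .
  have "K0^2 * exp (-(S i - S j)) * (\<Sum>k\<in>{1..n}. (p j k)^2) \<le> K0^2 * exp (-(S i - S j)) * (\<eta> * c1)"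
    by (rule mult_left_mono[OF B]) simp
  then show ?thesis using A by (simp add: mult_ac)
qed

lemma geom_down:
  fixes r :: real
  assumes "Mx \<le> i" and r0: "0 \<le> r"
  shows "(\<Sum>j\<in>{1..Mx}. r^(i-j)) * (1 - r) \<le> r^(i - Mx)"
  using assms(1)
proof (induction Mx)
  case 0 then show ?case using r0 by simp
next
  case (Suc Mx)
  have e: "i - Mx = Suc (i - Suc Mx)" using Suc.prems by simp
  have "(\<Sum>j\<in>{1..Suc Mx}. r^(i-j)) * (1 - r) = (\<Sum>j\<in>{1..Mx}. r^(i-j)) * (1 - r) + r^(i - Suc Mx) * (1 - r)"
    by (simp add: algebra_simps)
  also have "\<dots> \<le> r^(i - Mx) + r^(i - Suc Mx) * (1 - r)"
    using Suc by simp
  also have "\<dots> = r^(i - Suc Mx)" unfolding e by (simp add: algebra_simps)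
  finally show ?case .
qed

lemma pow_step: "1 \<le> i \<Longrightarrow> \<alpha> * real i powr (\<alpha>-1) \<le> real i powr \<alpha> - real (i - 1) powr \<alpha>"
proof -
  assume i: "1 \<le> i"
  show ?thesis
  proof (cases "i = 1")
    case True then show ?thesis using alpha_lt by simp
  next
    case False
    then have i2: "2 \<le> i" using i by simp
    have ri: "real (i - 1) = real i - 1" using i by simp
    have "\<exists>z>real i - 1. z < real i \<and> real i powr \<alpha> - (real i - 1) powr \<alpha> = (real i - (real i - 1)) * (\<alpha> * z powr (\<alpha> - 1))"
      by (rule MVT2) (use i2 in \<open>auto intro!: has_real_derivative_powr\<close>)
    then obtain z where z: "real i - 1 < z" "z < real i"
      and eq: "real i powr \<alpha> - (real i - 1) powr \<alpha> = \<alpha> * z powr (\<alpha> - 1)" by auto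
    have "real i powr (\<alpha> - 1) \<le> z powr (\<alpha> - 1)"
      by (rule powr_mono2') (use z i2 alpha_lt in auto)
    then have "\<alpha> * real i powr (\<alpha> - 1) \<le> \<alpha> * z powr (\<alpha> - 1)"
      using alpha_gt by (intro mult_left_mono) auto
    then show ?thesis using eq ri by simp
  qed
qed

lemma pow_sum: "(\<Sum>i\<in>{1..n}. real i powr (\<alpha> - 1)) \<le> real n powr \<alpha> / \<alpha>"
proof (induction n)
  case 0 then show ?case by simp
next
  case (Suc n)
  have "\<alpha> * real (Suc n) powr (\<alpha>-1) \<le> real (Suc n) powr \<alpha> - real (Suc n - 1) powr \<alpha>"
    by (rule pow_step) simp
  then have "real (Suc n) powr (\<alpha>-1) \<le> (real (Suc n) powr \<alpha> - real n powr \<alpha>) / \<alpha>"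
    using alpha_gt by (simp add: pos_le_divide_eq mult.commute)
  then show ?case using Suc by (simp add: diff_divide_distrib)
qed

definition Kb0 :: real where "Kb0 = K0^2 * c1^2 * exp \<eta>"

lemma bias_inner:
  assumes i: "1 \<le> i"
  shows "\<bar>\<Sum>j\<in>{1..n}. (if j < i \<and> j \<notin> win i then G n i j else 0)\<bar> \<le> Kb0 * real i powr (\<alpha> - 1)"
proof -
  define l where "l = blen C \<alpha> i"
  define L where "L = max 1 l"
  define Mx where "Mx = i - L"
  define r where "r = exp (- s i)"
  have si: "0 < s i" "s i \<le> \<eta>" using s_pos[OF i] s_le[OF i] by auto
  have r: "0 \<le> r" "r < 1" using si by (auto simp: r_def)
  define c where "c = K0^2 * \<eta> * c1"
  have c: "0 \<le> c" using c1_pos eta_pos by (simp add: c_def)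
  have "\<bar>\<Sum>j\<in>{1..n}. (if j < i \<and> j \<notin> win i then G n i j else 0)\<bar>
     \<le> (\<Sum>j\<in>{1..n}. \<bar>if j < i \<and> j \<notin> win i then G n i j else 0\<bar>)" by (rule sum_abs)
  also have "\<dots> \<le> (\<Sum>j\<in>{1..n}. (if 1 \<le> j \<and> j \<le> Mx then c * r^(i-j) else 0))"
  proof (rule sum_mono)
    fix j assume j: "j \<in> {1..n}"
    show "\<bar>if j < i \<and> j \<notin> win i then G n i j else 0\<bar> \<le> (if 1 \<le> j \<and> j \<le> Mx then c * r^(i-j) else 0)"
    proof (cases "j < i \<and> j \<notin> win i")
      case True
      then have jM: "j \<le> Mx" unfolding Mx_def L_def win_def l_def by auto
      have "\<bar>G n i j\<bar> \<le> c * exp (-(S i - S j))"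
        unfolding c_def using G_bound[of j i n] True by simp
      also have "exp (-(S i - S j)) \<le> exp (- (real (i - j) * s i))"
        using S_diff_lower'[of j i] True by simp
      also have "\<dots> = r^(i-j)" unfolding r_def by (rule exp_nat_mult)
      finally have "\<bar>G n i j\<bar> \<le> c * r^(i-j)" using c by (simp add: mult_left_mono)
      then show ?thesis using True j jM by simp
    next
      case F: False
      have "(if j < i \<and> j \<notin> win i then G n i j else 0) = 0" using F by auto
      then show ?thesis using c r by simp
    qed
  qed
  also have "\<dots> \<le> (\<Sum>j\<in>{1..Mx}. (if 1 \<le> j \<and> j \<le> Mx then c * r^(i-j) else 0))"
    by (rule sum_le_support) (use c r in auto)
  also have "\<dots> = c * (\<Sum>j\<in>{1..Mx}. r^(i-j))" by (simp add: sum_distrib_left)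
  finally have A0: "\<bar>\<Sum>j\<in>{1..n}. (if j < i \<and> j \<notin> win i then G n i j else 0)\<bar> \<le> c * (\<Sum>j\<in>{1..Mx}. r^(i-j))" .
  have B1: "(\<Sum>j\<in>{1..Mx}. r^(i-j)) \<le> r^L / (1 - r)"
  proof (cases "L \<le> i")
    case True
    have "(\<Sum>j\<in>{1..Mx}. r^(i-j)) * (1 - r) \<le> r^(i - Mx)"
      by (rule geom_down) (use r in \<open>simp_all add: Mx_def\<close>)
    moreover have "i - Mx = L" unfolding Mx_def using True by simp
    ultimately show ?thesis using r by (simp add: pos_le_divide_eq)
  next
    case False
    then have "Mx = 0" unfolding Mx_def by simp
    then show ?thesis using r by simp
  qed
  have B2a: "r^L \<le> r^l" unfolding L_def by (rule power_decreasing) (use r in auto)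
  have B2b: "r^l \<le> exp \<eta> * real i powr (-(\<eta> * C))"
  proof -
    have pw: "real i powr \<alpha> * real i powr (-\<alpha>) = 1"
      using i by (simp add: powr_add[symmetric])
    have "(C * real i powr \<alpha> * ln (real i) - 1) * s i \<le> real l * s i"
      unfolding l_def by (rule mult_right_mono[OF blen_ge[OF i]]) (use si in auto)
    moreover have "(C * real i powr \<alpha> * ln (real i) - 1) * s i = \<eta> * C * ln (real i) - s i"
      using pw by (simp add: s_eq algebra_simps)
    ultimately have "\<eta> * C * ln (real i) - \<eta> \<le> real l * s i" using si by linarith
    then have "exp (- (real l * s i)) \<le> exp (\<eta> - \<eta> * C * ln (real i))" by simp
    also have "\<dots> = exp \<eta> * real i powr (-(\<eta> * C))"
      using i by (simp add: powr_def exp_diff exp_minus divide_inverse)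
    finally show ?thesis unfolding r_def by (simp add: exp_nat_mult)
  qed
  have B3: "1 / (1 - r) \<le> c1 / s i"
  proof -
    have "s i \<le> c1 * (1 - r)" unfolding r_def by (rule conc) (use si in auto)
    then show ?thesis using r si c1_pos by (simp add: field_simps)
  qed
  have "r^L / (1 - r) = r^L * (1 / (1 - r))" by simp
  also have "\<dots> \<le> (exp \<eta> * real i powr (-(\<eta> * C))) * (c1 / s i)"
    by (rule mult_mono) (use B2a B2b B3 r in auto)
  finally have "(\<Sum>j\<in>{1..Mx}. r^(i-j)) \<le> exp \<eta> * real i powr (-(\<eta> * C)) * (c1 / s i)"
    using B1 by linarith
  then have A: "\<bar>\<Sum>j\<in>{1..n}. (if j < i \<and> j \<notin> win i then G n i j else 0)\<bar>
      \<le> c * (exp \<eta> * real i powr (-(\<eta> * C)) * (c1 / s i))"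
    using A0 c by (meson mult_left_mono order_trans)
  have "c * (exp \<eta> * real i powr (-(\<eta> * C)) * (c1 / s i)) = Kb0 * (real i powr \<alpha> * real i powr (-(\<eta> * C)))"
    using si eta_pos i unfolding c_def Kb0_def s_eq
    by (simp add: powr_minus field_simps power2_eq_square)
  also have "real i powr \<alpha> * real i powr (-(\<eta> * C)) = real i powr (\<alpha> - \<eta> * C)"
    using i by (simp add: powr_add[symmetric])
  also have "\<dots> \<le> real i powr (\<alpha> - 1)"
    by (rule powr_mono) (use etaC i in auto)
  finally show ?thesis using A unfolding Kb0_def
    by (smt (verit) c1_pos mult_left_mono zero_le_power2 exp_gt_zero mult_nonneg_nonneg)
qed

definition Kb :: real where "Kb = 2 * Kb0 / \<alpha>"

lemma bias_bound:
  assumes n: "1 \<le> n"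
  shows "\<bar>\<Sum>i\<in>{1..n}. \<Sum>j\<in>{1..n}. (Bm i j - 1) * G n i j\<bar> \<le> Kb * real n powr \<alpha>"
proof -
  define F where "F i j = (Bm i j - 1) * G n i j" for i j
  define H where "H i j = (if j < i \<and> j \<notin> win i then G n i j else 0)" for i j
  have pt: "F i j + F j i = -2 * (H i j + H j i)" for i j
  proof -
    consider "j < i" | "i = j" | "i < j" by linarith
    then show ?thesis
    proof cases
      case 1
      have "i \<notin> win j" using win_sub[of j] 1 by auto
      then have "Bm j i = 0" using 1 by (simp add: Bm_def)
      moreover have "H j i = 0" using 1 by (simp add: H_def)
      ultimately show ?thesis using 1 by (auto simp: F_def H_def Bm_def G_sym[of n j i])
    next
      case 2 then show ?thesis by (simp add: F_def H_def Bm_def)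
    next
      case 3
      have "j \<notin> win i" using win_sub[of i] 3 by auto
      then have "Bm i j = 0" using 3 by (simp add: Bm_def)
      moreover have "H i j = 0" using 3 by (simp add: H_def)
      ultimately show ?thesis using 3 by (auto simp: F_def H_def Bm_def G_sym[of n j i])
    qed
  qed
  have swF: "(\<Sum>i\<in>{1..n}. \<Sum>j\<in>{1..n}. F j i) = (\<Sum>i\<in>{1..n}. \<Sum>j\<in>{1..n}. F i j)" by (rule sum.swap)
  have swH: "(\<Sum>i\<in>{1..n}. \<Sum>j\<in>{1..n}. H j i) = (\<Sum>i\<in>{1..n}. \<Sum>j\<in>{1..n}. H i j)" by (rule sum.swap)
  have "2 * (\<Sum>i\<in>{1..n}. \<Sum>j\<in>{1..n}. F i j) = (\<Sum>i\<in>{1..n}. \<Sum>j\<in>{1..n}. F i j + F j i)"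
  proof -
    have "(\<Sum>i\<in>{1..n}. \<Sum>j\<in>{1..n}. F i j + F j i) = (\<Sum>i\<in>{1..n}. \<Sum>j\<in>{1..n}. F i j) + (\<Sum>i\<in>{1..n}. \<Sum>j\<in>{1..n}. F j i)"
      by (simp add: sum.distrib)
    then show ?thesis using swF by linarith
  qed
  also have "\<dots> = (\<Sum>i\<in>{1..n}. \<Sum>j\<in>{1..n}. -2 * (H i j + H j i))" by (simp add: pt)
  also have "\<dots> = -4 * (\<Sum>i\<in>{1..n}. \<Sum>j\<in>{1..n}. H i j)"
  proof -
    have "(\<Sum>i\<in>{1..n}. \<Sum>j\<in>{1..n}. -2 * (H i j + H j i)) = -2 * ((\<Sum>i\<in>{1..n}. \<Sum>j\<in>{1..n}. H i j) + (\<Sum>i\<in>{1..n}. \<Sum>j\<in>{1..n}. H j i))"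
      by (simp only: sum_distrib_left[symmetric] sum.distrib distrib_left)
    then show ?thesis unfolding swH by simp
  qed
  finally have eq: "(\<Sum>i\<in>{1..n}. \<Sum>j\<in>{1..n}. F i j) = -2 * (\<Sum>i\<in>{1..n}. \<Sum>j\<in>{1..n}. H i j)" by simp
  have "\<bar>\<Sum>i\<in>{1..n}. \<Sum>j\<in>{1..n}. H i j\<bar> \<le> (\<Sum>i\<in>{1..n}. \<bar>\<Sum>j\<in>{1..n}. H i j\<bar>)" by (rule sum_abs)
  also have "\<dots> \<le> (\<Sum>i\<in>{1..n}. Kb0 * real i powr (\<alpha> - 1))"
    by (rule sum_mono) (unfold H_def, rule bias_inner, simp)
  also have "\<dots> = Kb0 * (\<Sum>i\<in>{1..n}. real i powr (\<alpha> - 1))" by (simp add: sum_distrib_left)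
  also have "\<dots> \<le> Kb0 * (real n powr \<alpha> / \<alpha>)"
    by (rule mult_left_mono[OF pow_sum]) (simp add: Kb0_def)
  finally have "\<bar>\<Sum>i\<in>{1..n}. \<Sum>j\<in>{1..n}. H i j\<bar> \<le> Kb0 * (real n powr \<alpha> / \<alpha>)" .
  then show ?thesis unfolding F_def[symmetric] eq Kb_def by (simp add: abs_mult)
qed

end



lemma cntprod:
  fixes x :: "nat \<Rightarrow> real"
  shows "x k * x l * x k' * x l' = (\<Prod>i\<in>{k,l,k',l'}. x i ^ (of_bool (i=k) + of_bool (i=l) + of_bool (i=k') + of_bool (i=l')))"
  by (cases "k=l"; cases "k=k'"; cases "k=l'"; cases "l=k'"; cases "l=l'"; cases "k'=l'") (auto simp: power2_eq_square eval_nat_numeral mult_ac insert_commute)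

lemma cntmu:
  fixes mu :: "nat \<Rightarrow> real"
  assumes "mu 0 = 1" "mu 1 = 0"
  shows "(\<Prod>i\<in>{k,l,k',l'}. mu (of_bool (i=k) + of_bool (i=l) + of_bool (i=k') + of_bool (i=l')))
     = mu 2 ^2 * (of_bool (k=l \<and> k'=l') + of_bool (k=k' \<and> l=l') + of_bool (k=l' \<and> l=k')) + (mu 4 - 3 * mu 2^2) * of_bool (k=l \<and> k=k' \<and> k=l')"
  using assms
  by (cases "k=l"; cases "k=k'"; cases "k=l'"; cases "l=k'"; cases "l=l'"; cases "k'=l'") (auto simp: power2_eq_square eval_nat_numeral mult_ac insert_commute)

lemma ob: "of_bool P * x = (if P then x else (0::real))" by simp

lemma sum_diag:
  fixes f :: "nat \<Rightarrow> nat \<Rightarrow> real"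
  assumes "finite A"
  shows "(\<Sum>k\<in>A. \<Sum>l\<in>A. of_bool (k = l) * f k l) = (\<Sum>k\<in>A. f k k)"
proof (rule sum.cong)
  fix k assume "k \<in> A"
  then show "(\<Sum>l\<in>A. of_bool (k = l) * f k l) = f k k"
    using assms by (simp add: ob sum.delta)
qed simp

lemma sum_pt:
  fixes g :: "nat \<Rightarrow> nat \<Rightarrow> real"
  assumes "finite A" "k \<in> A" "l \<in> A"
  shows "(\<Sum>k'\<in>A. \<Sum>l'\<in>A. of_bool (k' = k \<and> l' = l) * g k' l') = g k l"
proof -
  have "(\<Sum>l'\<in>A. of_bool (k' = k \<and> l' = l) * g k' l') = of_bool (k' = k) * g k' l" for k'
    using assms by (cases "k' = k") (simp_all add: ob sum.delta')
  then have "(\<Sum>k'\<in>A. \<Sum>l'\<in>A. of_bool (k' = k \<and> l' = l) * g k' l') = (\<Sum>k'\<in>A. of_bool (k' = k) * g k' l)"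
    by simp
  also have "\<dots> = g k l" using assms by (simp add: ob sum.delta')
  finally show ?thesis .
qed

lemma d1:
  fixes q :: "nat \<Rightarrow> nat \<Rightarrow> real" assumes A: "finite A"
  shows "(\<Sum>k\<in>A. \<Sum>l\<in>A. \<Sum>k'\<in>A. \<Sum>l'\<in>A. q k l * q k' l' * of_bool (k=l \<and> k'=l')) = (\<Sum>k\<in>A. q k k)^2"
proof -
  have "(\<Sum>k\<in>A. \<Sum>l\<in>A. \<Sum>k'\<in>A. \<Sum>l'\<in>A. q k l * q k' l' * of_bool (k=l \<and> k'=l'))
      = (\<Sum>k\<in>A. \<Sum>l\<in>A. \<Sum>k'\<in>A. \<Sum>l'\<in>A. (of_bool (k=l) * q k l) * (of_bool (k'=l') * q k' l'))"
    by (intro sum.cong refl) (simp add: of_bool_def)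
  also have "\<dots> = (\<Sum>k\<in>A. \<Sum>l\<in>A. of_bool (k=l) * q k l * (\<Sum>k'\<in>A. \<Sum>l'\<in>A. of_bool (k'=l') * q k' l'))"
    by (simp only: sum_distrib_left[symmetric])
  also have "\<dots> = (\<Sum>k\<in>A. \<Sum>l\<in>A. of_bool (k=l) * q k l) * (\<Sum>k'\<in>A. \<Sum>l'\<in>A. of_bool (k'=l') * q k' l')"
    by (simp only: sum_distrib_right[symmetric])
  also have "\<dots> = (\<Sum>k\<in>A. q k k)^2" using sum_diag[OF A, of q] by (simp add: power2_eq_square)
  finally show ?thesis .
qed

lemma d2:
  fixes q :: "nat \<Rightarrow> nat \<Rightarrow> real" assumes A: "finite A"
  shows "(\<Sum>k\<in>A. \<Sum>l\<in>A. \<Sum>k'\<in>A. \<Sum>l'\<in>A. q k l * q k' l' * of_bool (k=k' \<and> l=l')) = (\<Sum>k\<in>A. \<Sum>l\<in>A. (q k l)^2)"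
proof -
  have "(\<Sum>k\<in>A. \<Sum>l\<in>A. \<Sum>k'\<in>A. \<Sum>l'\<in>A. q k l * q k' l' * of_bool (k=k' \<and> l=l'))
      = (\<Sum>k\<in>A. \<Sum>l\<in>A. \<Sum>k'\<in>A. \<Sum>l'\<in>A. q k l * (of_bool (k'=k \<and> l'=l) * q k' l'))"
    by (intro sum.cong refl) (auto simp: of_bool_def)
  also have "\<dots> = (\<Sum>k\<in>A. \<Sum>l\<in>A. q k l * (\<Sum>k'\<in>A. \<Sum>l'\<in>A. of_bool (k'=k \<and> l'=l) * q k' l'))"
    by (simp only: sum_distrib_left[symmetric])
  also have "\<dots> = (\<Sum>k\<in>A. \<Sum>l\<in>A. (q k l)^2)"
    by (intro sum.cong refl) (simp add: sum_pt[OF A] power2_eq_square)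
  finally show ?thesis .
qed

lemma d3:
  fixes q :: "nat \<Rightarrow> nat \<Rightarrow> real" assumes A: "finite A"
  shows "(\<Sum>k\<in>A. \<Sum>l\<in>A. \<Sum>k'\<in>A. \<Sum>l'\<in>A. q k l * q k' l' * of_bool (k=l' \<and> l=k')) = (\<Sum>k\<in>A. \<Sum>l\<in>A. q k l * q l k)"
proof -
  have "(\<Sum>k\<in>A. \<Sum>l\<in>A. \<Sum>k'\<in>A. \<Sum>l'\<in>A. q k l * q k' l' * of_bool (k=l' \<and> l=k'))
      = (\<Sum>k\<in>A. \<Sum>l\<in>A. \<Sum>k'\<in>A. \<Sum>l'\<in>A. q k l * (of_bool (k'=l \<and> l'=k) * q k' l'))"
    by (intro sum.cong refl) (auto simp: of_bool_def)
  also have "\<dots> = (\<Sum>k\<in>A. \<Sum>l\<in>A. q k l * (\<Sum>k'\<in>A. \<Sum>l'\<in>A. of_bool (k'=l \<and> l'=k) * q k' l'))"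
    by (simp only: sum_distrib_left[symmetric])
  also have "\<dots> = (\<Sum>k\<in>A. \<Sum>l\<in>A. q k l * q l k)"
    by (intro sum.cong refl) (simp add: sum_pt[OF A])
  finally show ?thesis .
qed

lemma d4:
  fixes q :: "nat \<Rightarrow> nat \<Rightarrow> real" assumes A: "finite A"
  shows "(\<Sum>k\<in>A. \<Sum>l\<in>A. \<Sum>k'\<in>A. \<Sum>l'\<in>A. q k l * q k' l' * of_bool (k=l \<and> k=k' \<and> k=l')) = (\<Sum>k\<in>A. (q k k)^2)"
proof -
  have "(\<Sum>k\<in>A. \<Sum>l\<in>A. \<Sum>k'\<in>A. \<Sum>l'\<in>A. q k l * q k' l' * of_bool (k=l \<and> k=k' \<and> k=l'))
      = (\<Sum>k\<in>A. \<Sum>l\<in>A. \<Sum>k'\<in>A. \<Sum>l'\<in>A. of_bool (k = l) * q k l * (of_bool (k'=k \<and> l'=k) * q k' l'))"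
    by (intro sum.cong refl) (auto simp: of_bool_def)
  also have "\<dots> = (\<Sum>k\<in>A. \<Sum>l\<in>A. of_bool (k = l) * q k l * (\<Sum>k'\<in>A. \<Sum>l'\<in>A. of_bool (k'=k \<and> l'=k) * q k' l'))"
    by (simp only: sum_distrib_left[symmetric])
  also have "\<dots> = (\<Sum>k\<in>A. \<Sum>l\<in>A. of_bool (k = l) * (q k l * q k k))"
    by (intro sum.cong refl) (simp add: sum_pt[OF A] mult.assoc)
  also have "\<dots> = (\<Sum>k\<in>A. (q k k)^2)" using sum_diag[OF A, of "\<lambda>k l. q k l * q k k"]
    by (simp add: power2_eq_square)
  finally show ?thesis .
qed


lemma pow_le_1_4: "m \<le> 4 \<Longrightarrow> \<bar>(x::real)^m\<bar> \<le> 1 + x^4"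
proof (cases "\<bar>x\<bar> \<le> 1")
  case True
  assume "m \<le> 4"
  have "\<bar>x\<bar>^m \<le> 1" using True by (simp add: power_le_one)
  moreover have "0 \<le> x^4" by (simp add: zero_le_even_power)
  moreover have "\<bar>x^m\<bar> = \<bar>x\<bar>^m" by (simp add: power_abs)
  ultimately show ?thesis by linarith
next
  case False
  assume m: "m \<le> 4"
  have "\<bar>x\<bar>^m \<le> \<bar>x\<bar>^4" using False m by (intro power_increasing) auto
  then show ?thesis by (simp add: power_abs power_even_abs_numeral)
qed

locale iid = prob_space M for M :: "'a measure" +
  fixes e :: "nat \<Rightarrow> 'a \<Rightarrow> real"
  assumes e_meas: "\<And>i. i \<ge> 1 \<Longrightarrow> e i \<in> borel_measurable M"
    and e_indep: "indep_vars (\<lambda>_. borel) e {1..}"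
    and e_distr: "\<And>i. i \<ge> 1 \<Longrightarrow> distr M borel (e i) = distr M borel (e 1)"
    and e_int: "\<And>i. i \<ge> 1 \<Longrightarrow> integrable M (e i) \<and> expectation (e i) = 0"
    and e_int4: "integrable M (\<lambda>\<omega>. (e 1 \<omega>)^4)"
begin

definition mu :: "nat \<Rightarrow> real" where "mu m = expectation (\<lambda>\<omega>. (e 1 \<omega>)^m)"

lemma mu0: "mu 0 = 1" by (simp add: mu_def prob_space)

lemma mu1: "mu 1 = 0" using e_int[of 1] by (simp add: mu_def)

lemma mu1': "mu (Suc 0) = 0" using mu1 by simp

lemma int_pow1: "m \<le> 4 \<Longrightarrow> integrable M (\<lambda>\<omega>. (e 1 \<omega>)^m)"
proof -
  assume m: "m \<le> 4"
  have "integrable M (\<lambda>\<omega>. 1 + (e 1 \<omega>)^4)"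
    using e_int4 by (intro Bochner_Integration.integrable_add integrable_const)
  moreover have "(\<lambda>\<omega>. (e 1 \<omega>)^m) \<in> borel_measurable M"
    using e_meas[of 1] by measurable
  moreover have "AE \<omega> in M. norm ((e 1 \<omega>)^m) \<le> norm (1 + (e 1 \<omega>)^4)"
    using pow_le_1_4[OF m] by (auto intro!: AE_I2 order_trans[OF _ abs_ge_self])
  ultimately show ?thesis by (rule Bochner_Integration.integrable_bound)
qed

lemma int_pow: "1 \<le> i \<Longrightarrow> m \<le> 4 \<Longrightarrow> integrable M (\<lambda>\<omega>. (e i \<omega>)^m)"
proof -
  assume i: "1 \<le> i" and m: "m \<le> 4"
  have "integrable M (\<lambda>\<omega>. (e i \<omega>)^m) = integrable (distr M borel (e i)) (\<lambda>x. x^m)"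
    by (rule integrable_distr_eq[symmetric]) (use e_meas[OF i] in auto)
  also have "\<dots> = integrable (distr M borel (e 1)) (\<lambda>x. x^m)" using e_distr[OF i] by simp
  also have "\<dots> = integrable M (\<lambda>\<omega>. (e 1 \<omega>)^m)"
    by (rule integrable_distr_eq) (use e_meas[of 1] in auto)
  finally show ?thesis using int_pow1[OF m] by simp
qed

lemma mom_eq: "1 \<le> i \<Longrightarrow> expectation (\<lambda>\<omega>. (e i \<omega>)^m) = mu m"
proof -
  assume i: "1 \<le> i"
  have "expectation (\<lambda>\<omega>. (e i \<omega>)^m) = integral\<^sup>L (distr M borel (e i)) (\<lambda>x. x^m)"
    by (rule integral_distr[symmetric]) (use e_meas[OF i] in auto)
  also have "\<dots> = integral\<^sup>L (distr M borel (e 1)) (\<lambda>x. x^m)" using e_distr[OF i] by simp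
  also have "\<dots> = mu m" unfolding mu_def
    by (rule integral_distr) (use e_meas[of 1] in auto)
  finally show ?thesis .
qed

lemma prod_mom:
  assumes I: "finite I" "\<And>i. i \<in> I \<Longrightarrow> 1 \<le> i" and m: "\<And>i. i \<in> I \<Longrightarrow> m i \<le> 4"
  shows "integrable M (\<lambda>\<omega>. \<Prod>i\<in>I. (e i \<omega>)^(m i))"
    and "expectation (\<lambda>\<omega>. \<Prod>i\<in>I. (e i \<omega>)^(m i)) = (\<Prod>i\<in>I. mu (m i))"
proof -
  have sub: "I \<subseteq> {1..}" using I by auto
  have ind: "indep_vars (\<lambda>_. borel) (\<lambda>i \<omega>. (e i \<omega>)^(m i)) I"
    by (rule indep_vars_compose2[OF indep_vars_subset[OF e_indep sub]]) auto
  have int: "\<And>i. i \<in> I \<Longrightarrow> integrable M (\<lambda>\<omega>. (e i \<omega>)^(m i))"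
    using int_pow I m by auto
  show "integrable M (\<lambda>\<omega>. \<Prod>i\<in>I. (e i \<omega>)^(m i))"
    by (rule indep_vars_integrable[OF I(1) ind int])
  have "expectation (\<lambda>\<omega>. \<Prod>i\<in>I. (e i \<omega>)^(m i)) = (\<Prod>i\<in>I. expectation (\<lambda>\<omega>. (e i \<omega>)^(m i)))"
    by (rule indep_vars_lebesgue_integral[OF I(1) ind int])
  also have "\<dots> = (\<Prod>i\<in>I. mu (m i))" using I by (intro prod.cong refl mom_eq) auto
  finally show "expectation (\<lambda>\<omega>. \<Prod>i\<in>I. (e i \<omega>)^(m i)) = (\<Prod>i\<in>I. mu (m i))" .
qed

lemma m4:
  assumes "1 \<le> k" "1 \<le> l" "1 \<le> k'" "1 \<le> l'"
  shows "integrable M (\<lambda>\<omega>. e k \<omega> * e l \<omega> * e k' \<omega> * e l' \<omega>)"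
    and "expectation (\<lambda>\<omega>. e k \<omega> * e l \<omega> * e k' \<omega> * e l' \<omega>)
       = mu 2 ^2 * (of_bool (k=l \<and> k'=l') + of_bool (k=k' \<and> l=l') + of_bool (k=l' \<and> l=k')) + (mu 4 - 3 * mu 2^2) * of_bool (k=l \<and> k=k' \<and> k=l')"
proof -
  define cnt where "cnt i = (of_bool (i=k) + of_bool (i=l) + of_bool (i=k') + of_bool (i=l') :: nat)" for i
  have eq: "(\<lambda>\<omega>. e k \<omega> * e l \<omega> * e k' \<omega> * e l' \<omega>) = (\<lambda>\<omega>. \<Prod>i\<in>{k,l,k',l'}. (e i \<omega>)^(cnt i))"
    unfolding cnt_def by (rule ext) (rule cntprod)
  have c4: "cnt i \<le> 4" for i unfolding cnt_def by simp
  have I: "finite {k,l,k',l'}" "\<And>i. i \<in> {k,l,k',l'} \<Longrightarrow> 1 \<le> i" using assms by auto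
  show "integrable M (\<lambda>\<omega>. e k \<omega> * e l \<omega> * e k' \<omega> * e l' \<omega>)"
    unfolding eq by (rule prod_mom(1)) (use I c4 in auto)
  have E: "expectation (\<lambda>\<omega>. \<Prod>i\<in>{k,l,k',l'}. (e i \<omega>)^(cnt i)) = (\<Prod>i\<in>{k,l,k',l'}. mu (cnt i))"
    by (rule prod_mom(2)) (use I c4 in auto)
  show "expectation (\<lambda>\<omega>. e k \<omega> * e l \<omega> * e k' \<omega> * e l' \<omega>)
       = mu 2 ^2 * (of_bool (k=l \<and> k'=l') + of_bool (k=k' \<and> l=l') + of_bool (k=l' \<and> l=k')) + (mu 4 - 3 * mu 2^2) * of_bool (k=l \<and> k=k' \<and> k=l')"
    unfolding eq E unfolding cnt_def by (rule cntmu[OF mu0 mu1])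
qed

lemma m2:
  assumes "1 \<le> k" "1 \<le> l"
  shows "integrable M (\<lambda>\<omega>. e k \<omega> * e l \<omega>)"
    and "expectation (\<lambda>\<omega>. e k \<omega> * e l \<omega>) = mu 2 * of_bool (k = l)"
proof -
  have "integrable M (\<lambda>\<omega>. e k \<omega> * e l \<omega> * 1 * 1) \<and> expectation (\<lambda>\<omega>. e k \<omega> * e l \<omega> * 1 * 1) = mu 2 * of_bool (k = l)"
  proof (cases "k = l")
    case True
    have "integrable M (\<lambda>\<omega>. (e k \<omega>)^2)" by (rule int_pow) (use assms in auto)
    moreover have "expectation (\<lambda>\<omega>. (e k \<omega>)^2) = mu 2" by (rule mom_eq) (use assms in auto)
    ultimately show ?thesis using True by (simp add: power2_eq_square)
  next
    case False
    have I: "finite {k,l}" "\<And>i. i \<in> {k,l} \<Longrightarrow> 1 \<le> i" using assms by auto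
    have "(\<lambda>\<omega>. e k \<omega> * e l \<omega> * 1 * 1) = (\<lambda>\<omega>. \<Prod>i\<in>{k,l}. (e i \<omega>)^((\<lambda>_. 1) i))"
      using False by auto
    moreover have "(\<Prod>i\<in>{k,l}. mu ((\<lambda>_. 1) i)) = 0" using False by (simp add: mu1')
    ultimately show ?thesis using prod_mom[OF I, of "\<lambda>_. 1"] False by simp
  qed
  then show "integrable M (\<lambda>\<omega>. e k \<omega> * e l \<omega>)" "expectation (\<lambda>\<omega>. e k \<omega> * e l \<omega>) = mu 2 * of_bool (k = l)"
    by simp_all
qed


lemma ring4: "(w::real) * (X * (a + b + c) + Y * d) = X * (w * a) + X * (w * b) + X * (w * c) + Y * (w * d)"
  by (simp add: algebra_simps)

lemma quad:
  fixes q :: "nat \<Rightarrow> nat \<Rightarrow> real"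
  assumes A: "finite A" "\<And>k. k \<in> A \<Longrightarrow> 1 \<le> k"
  shows "integrable M (\<lambda>\<omega>. \<Sum>k\<in>A. \<Sum>l\<in>A. q k l * (e k \<omega> * e l \<omega>))"
    and "expectation (\<lambda>\<omega>. \<Sum>k\<in>A. \<Sum>l\<in>A. q k l * (e k \<omega> * e l \<omega>)) = mu 2 * (\<Sum>k\<in>A. q k k)"
    and "integrable M (\<lambda>\<omega>. (\<Sum>k\<in>A. \<Sum>l\<in>A. q k l * (e k \<omega> * e l \<omega>))^2)"
    and "expectation (\<lambda>\<omega>. (\<Sum>k\<in>A. \<Sum>l\<in>A. q k l * (e k \<omega> * e l \<omega>))^2)
       = mu 2^2 * ((\<Sum>k\<in>A. q k k)^2 + (\<Sum>k\<in>A. \<Sum>l\<in>A. (q k l)^2) + (\<Sum>k\<in>A. \<Sum>l\<in>A. q k l * q l k))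
         + (mu 4 - 3 * mu 2^2) * (\<Sum>k\<in>A. (q k k)^2)"
proof -
  have i2: "\<And>k l. k \<in> A \<Longrightarrow> l \<in> A \<Longrightarrow> integrable M (\<lambda>\<omega>. e k \<omega> * e l \<omega>)"
    using m2(1) A by auto
  show "integrable M (\<lambda>\<omega>. \<Sum>k\<in>A. \<Sum>l\<in>A. q k l * (e k \<omega> * e l \<omega>))"
    by (intro Bochner_Integration.integrable_sum integrable_mult_right i2)
  have "expectation (\<lambda>\<omega>. \<Sum>k\<in>A. \<Sum>l\<in>A. q k l * (e k \<omega> * e l \<omega>))
      = (\<Sum>k\<in>A. \<Sum>l\<in>A. q k l * expectation (\<lambda>\<omega>. e k \<omega> * e l \<omega>))"
    by (simp add: Bochner_Integration.integral_sum integrable_mult_right i2 Bochner_Integration.integrable_sum)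
  also have "\<dots> = (\<Sum>k\<in>A. \<Sum>l\<in>A. of_bool (k = l) * (mu 2 * q k l))"
    by (intro sum.cong refl) (simp add: m2(2)[OF A(2) A(2)])
  also have "\<dots> = mu 2 * (\<Sum>k\<in>A. q k k)" by (simp add: sum_diag[OF A(1)] sum_distrib_left)
  finally show "expectation (\<lambda>\<omega>. \<Sum>k\<in>A. \<Sum>l\<in>A. q k l * (e k \<omega> * e l \<omega>)) = mu 2 * (\<Sum>k\<in>A. q k k)" .
  have sq: "(\<Sum>k\<in>A. \<Sum>l\<in>A. q k l * (e k \<omega> * e l \<omega>))^2
     = (\<Sum>k\<in>A. \<Sum>l\<in>A. \<Sum>k'\<in>A. \<Sum>l'\<in>A. q k l * q k' l' * (e k \<omega> * e l \<omega> * e k' \<omega> * e l' \<omega>))" for \<omega>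
  proof -
    have "(\<Sum>k\<in>A. \<Sum>l\<in>A. q k l * (e k \<omega> * e l \<omega>))^2
      = (\<Sum>k\<in>A. \<Sum>l\<in>A. q k l * (e k \<omega> * e l \<omega>) * (\<Sum>k'\<in>A. \<Sum>l'\<in>A. q k' l' * (e k' \<omega> * e l' \<omega>)))"
      by (simp only: power2_eq_square sum_distrib_right)
    also have "\<dots> = (\<Sum>k\<in>A. \<Sum>l\<in>A. \<Sum>k'\<in>A. \<Sum>l'\<in>A. q k l * (e k \<omega> * e l \<omega>) * (q k' l' * (e k' \<omega> * e l' \<omega>)))"
      by (simp only: sum_distrib_left)
    also have "\<dots> = (\<Sum>k\<in>A. \<Sum>l\<in>A. \<Sum>k'\<in>A. \<Sum>l'\<in>A. q k l * q k' l' * (e k \<omega> * e l \<omega> * e k' \<omega> * e l' \<omega>))"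
      by (simp only: mult_ac)
    finally show ?thesis .
  qed
  have i4: "\<And>k l k' l'. k \<in> A \<Longrightarrow> l \<in> A \<Longrightarrow> k' \<in> A \<Longrightarrow> l' \<in> A \<Longrightarrow>
     integrable M (\<lambda>\<omega>. e k \<omega> * e l \<omega> * e k' \<omega> * e l' \<omega>)"
    using m4(1) A by auto
  show "integrable M (\<lambda>\<omega>. (\<Sum>k\<in>A. \<Sum>l\<in>A. q k l * (e k \<omega> * e l \<omega>))^2)"
    unfolding sq by (intro Bochner_Integration.integrable_sum integrable_mult_right i4)
  define X where "X = mu 2 ^2"
  define Y where "Y = mu 4 - 3 * mu 2^2"
  have "expectation (\<lambda>\<omega>. (\<Sum>k\<in>A. \<Sum>l\<in>A. q k l * (e k \<omega> * e l \<omega>))^2)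
     = (\<Sum>k\<in>A. \<Sum>l\<in>A. \<Sum>k'\<in>A. \<Sum>l'\<in>A. q k l * q k' l' * expectation (\<lambda>\<omega>. e k \<omega> * e l \<omega> * e k' \<omega> * e l' \<omega>))"
    unfolding sq
    by (simp add: Bochner_Integration.integral_sum integrable_mult_right i4 Bochner_Integration.integrable_sum)
  also have "\<dots> = (\<Sum>k\<in>A. \<Sum>l\<in>A. \<Sum>k'\<in>A. \<Sum>l'\<in>A.
        X * (q k l * q k' l' * of_bool (k=l \<and> k'=l')) + X * (q k l * q k' l' * of_bool (k=k' \<and> l=l'))
      + X * (q k l * q k' l' * of_bool (k=l' \<and> l=k')) + Y * (q k l * q k' l' * of_bool (k=l \<and> k=k' \<and> k=l')))"
  proof (intro sum.cong refl)
    fix k l k' l' assume k: "k \<in> A" "l \<in> A" "k' \<in> A" "l' \<in> A"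
    have E4: "expectation (\<lambda>\<omega>. e k \<omega> * e l \<omega> * e k' \<omega> * e l' \<omega>) =
       X * (of_bool (k=l \<and> k'=l') + of_bool (k=k' \<and> l=l') + of_bool (k=l' \<and> l=k')) + Y * of_bool (k=l \<and> k=k' \<and> k=l')"
      unfolding X_def Y_def by (rule m4(2)) (use k A in auto)
    show "q k l * q k' l' * expectation (\<lambda>\<omega>. e k \<omega> * e l \<omega> * e k' \<omega> * e l' \<omega>) =
        X * (q k l * q k' l' * of_bool (k=l \<and> k'=l')) + X * (q k l * q k' l' * of_bool (k=k' \<and> l=l'))
      + X * (q k l * q k' l' * of_bool (k=l' \<and> l=k')) + Y * (q k l * q k' l' * of_bool (k=l \<and> k=k' \<and> k=l'))"
      unfolding E4 by (rule ring4)
  qed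
  also have "\<dots> = X * (\<Sum>k\<in>A. \<Sum>l\<in>A. \<Sum>k'\<in>A. \<Sum>l'\<in>A. q k l * q k' l' * of_bool (k=l \<and> k'=l'))
     + X * (\<Sum>k\<in>A. \<Sum>l\<in>A. \<Sum>k'\<in>A. \<Sum>l'\<in>A. q k l * q k' l' * of_bool (k=k' \<and> l=l'))
     + X * (\<Sum>k\<in>A. \<Sum>l\<in>A. \<Sum>k'\<in>A. \<Sum>l'\<in>A. q k l * q k' l' * of_bool (k=l' \<and> l=k'))
     + Y * (\<Sum>k\<in>A. \<Sum>l\<in>A. \<Sum>k'\<in>A. \<Sum>l'\<in>A. q k l * q k' l' * of_bool (k=l \<and> k=k' \<and> k=l'))"
    by (simp only: sum.distrib sum_distrib_left[symmetric])
  also have "\<dots> = mu 2^2 * ((\<Sum>k\<in>A. q k k)^2 + (\<Sum>k\<in>A. \<Sum>l\<in>A. (q k l)^2) + (\<Sum>k\<in>A. \<Sum>l\<in>A. q k l * q l k))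
         + (mu 4 - 3 * mu 2^2) * (\<Sum>k\<in>A. (q k k)^2)"
    unfolding d1[OF A(1)] d2[OF A(1)] d3[OF A(1)] d4[OF A(1)] X_def Y_def by (simp add: algebra_simps)
  finally show "expectation (\<lambda>\<omega>. (\<Sum>k\<in>A. \<Sum>l\<in>A. q k l * (e k \<omega> * e l \<omega>))^2)
       = mu 2^2 * ((\<Sum>k\<in>A. q k k)^2 + (\<Sum>k\<in>A. \<Sum>l\<in>A. (q k l)^2) + (\<Sum>k\<in>A. \<Sum>l\<in>A. q k l * q l k))
         + (mu 4 - 3 * mu 2^2) * (\<Sum>k\<in>A. (q k k)^2)" .
qed

end



lemma swap4:
  fixes F :: "nat \<Rightarrow> nat \<Rightarrow> nat \<Rightarrow> nat \<Rightarrow> real"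
  shows "(\<Sum>i\<in>A. \<Sum>j\<in>A. \<Sum>k\<in>A. \<Sum>l\<in>A. F i j k l) = (\<Sum>k\<in>A. \<Sum>l\<in>A. \<Sum>i\<in>A. \<Sum>j\<in>A. F i j k l)"
proof -
  have "(\<Sum>i\<in>A. \<Sum>j\<in>A. \<Sum>k\<in>A. \<Sum>l\<in>A. F i j k l) = (\<Sum>i\<in>A. \<Sum>k\<in>A. \<Sum>j\<in>A. \<Sum>l\<in>A. F i j k l)"
    by (rule sum.cong[OF refl], rule sum.swap)
  also have "\<dots> = (\<Sum>i\<in>A. \<Sum>k\<in>A. \<Sum>l\<in>A. \<Sum>j\<in>A. F i j k l)"
    by (rule sum.cong[OF refl], rule sum.cong[OF refl], rule sum.swap)
  also have "\<dots> = (\<Sum>k\<in>A. \<Sum>i\<in>A. \<Sum>l\<in>A. \<Sum>j\<in>A. F i j k l)"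
    by (rule sum.swap)
  also have "\<dots> = (\<Sum>k\<in>A. \<Sum>l\<in>A. \<Sum>i\<in>A. \<Sum>j\<in>A. F i j k l)"
    by (rule sum.cong[OF refl], rule sum.swap)
  finally show ?thesis .
qed

context sgd
begin

lemma a_Suc: "1 \<le> k \<Longrightarrow> k \<le> i \<Longrightarrow> a (Suc i) k = (1 - s (Suc i)) * a i k"
proof -
  assume k: "1 \<le> k" "k \<le> i"
  have "{k<..Suc i} = insert (Suc i) {k<..i}" using k by auto
  then have "(\<Prod>m\<in>{k<..Suc i}. 1 - s m) = (1 - s (Suc i)) * (\<Prod>m\<in>{k<..i}. 1 - s m)" by simp
  then show ?thesis using k by (simp add: a_def)
qed

lemma a_diag: "a (Suc i) (Suc i) = s (Suc i)" by (simp add: a_def)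

lemma a_zero: "i < k \<Longrightarrow> a i k = 0" by (simp add: a_def)

lemma Xrep: "Xseq \<eta> \<alpha> e i \<omega> = (\<Sum>k\<in>{1..i}. a i k * e k \<omega>)"
proof (induction i)
  case 0 then show ?case by simp
next
  case (Suc i)
  have "(\<Sum>k\<in>{1..Suc i}. a (Suc i) k * e k \<omega>) = (\<Sum>k\<in>{1..i}. a (Suc i) k * e k \<omega>) + s (Suc i) * e (Suc i) \<omega>"
    by (simp add: a_diag)
  also have "(\<Sum>k\<in>{1..i}. a (Suc i) k * e k \<omega>) = (1 - s (Suc i)) * (\<Sum>k\<in>{1..i}. a i k * e k \<omega>)"
    by (simp add: sum_distrib_left a_Suc mult.assoc)
  finally show ?case using Suc by simp
qed

lemma Xrep_n: "i \<le> n \<Longrightarrow> Xseq \<eta> \<alpha> e i \<omega> = (\<Sum>k\<in>{1..n}. a i k * e k \<omega>)"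
proof -
  assume "i \<le> n"
  have "(\<Sum>k\<in>{1..i}. a i k * e k \<omega>) = (\<Sum>k\<in>{1..n}. a i k * e k \<omega>)"
    by (rule sum.mono_neutral_left) (use \<open>i \<le> n\<close> in \<open>auto simp: a_zero\<close>)
  then show ?thesis by (simp add: Xrep)
qed

lemma i_notin_win: "i \<notin> win i" using win_sub[of i] by auto

lemma Wrep: "i \<le> n \<Longrightarrow> Wsum \<eta> \<alpha> C e i \<omega> = (\<Sum>j\<in>{1..n}. (if j \<in> win i then Xseq \<eta> \<alpha> e j \<omega> else 0))"
proof -
  assume i: "i \<le> n"
  have "Wsum \<eta> \<alpha> C e i \<omega> = (\<Sum>j\<in>win i. Xseq \<eta> \<alpha> e j \<omega>)"
    by (simp add: Wsum_def win_def)
  also have "\<dots> = (\<Sum>j\<in>{1..n} \<inter> win i. Xseq \<eta> \<alpha> e j \<omega>)"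
  proof (rule sum.mono_neutral_right)
    show "finite (win i)" by (simp add: win_def)
    show "{1..n} \<inter> win i \<subseteq> win i" by auto
    show "\<forall>j\<in>win i - {1..n} \<inter> win i. Xseq \<eta> \<alpha> e j \<omega> = 0"
    proof
      fix j assume "j \<in> win i - {1..n} \<inter> win i"
      then have "j \<in> win i" "j \<notin> {1..n}" by auto
      then have "j = 0" using win_sub[of i] i by auto
      then show "Xseq \<eta> \<alpha> e j \<omega> = 0" by simp
    qed
  qed
  also have "\<dots> = (\<Sum>j\<in>{1..n}. (if j \<in> win i then Xseq \<eta> \<alpha> e j \<omega> else 0))"
    by (simp add: sum.inter_restrict)
  finally show ?thesis .
qed

lemma term_rep:
  assumes i1: "1 \<le> i" and iin: "i \<le> n"
  shows "(Xseq \<eta> \<alpha> e i \<omega>)\<^sup>2 + 2 * Xseq \<eta> \<alpha> e i \<omega> * Wsum \<eta> \<alpha> C e i \<omega>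
       = (\<Sum>j\<in>{1..n}. Bm i j * (Xseq \<eta> \<alpha> e i \<omega> * Xseq \<eta> \<alpha> e j \<omega>))"
proof -
  let ?X = "\<lambda>j. Xseq \<eta> \<alpha> e j \<omega>"
  have B: "Bm i j * P = (if j = i then P else 0) + (if j \<in> win i then 2 * P else 0)" for j P
    using i_notin_win[of i] by (auto simp: Bm_def)
  have "(\<Sum>j\<in>{1..n}. Bm i j * (?X i * ?X j))
      = (\<Sum>j\<in>{1..n}. (if j = i then ?X i * ?X j else 0)) + (\<Sum>j\<in>{1..n}. (if j \<in> win i then 2 * (?X i * ?X j) else 0))"
    unfolding B by (rule sum.distrib)
  also have "(\<Sum>j\<in>{1..n}. (if j = i then ?X i * ?X j else 0)) = (?X i)^2"
    using i1 iin by (simp add: sum.delta' power2_eq_square)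
  also have "(\<Sum>j\<in>{1..n}. (if j \<in> win i then 2 * (?X i * ?X j) else 0)) = 2 * ?X i * Wsum \<eta> \<alpha> C e i \<omega>"
    unfolding Wrep[OF iin] by (simp add: sum_distrib_left if_distrib mult.assoc cong: if_cong)
  finally show ?thesis by simp
qed

lemma XX: "i \<le> n \<Longrightarrow> j \<le> n \<Longrightarrow> Xseq \<eta> \<alpha> e i \<omega> * Xseq \<eta> \<alpha> e j \<omega> = (\<Sum>k\<in>{1..n}. \<Sum>l\<in>{1..n}. a i k * a j l * (e k \<omega> * e l \<omega>))"
  by (simp add: Xrep_n sum_product mult_ac)

lemma shat_rep:
  assumes n: "1 \<le> n"
  shows "sigma_hat \<eta> \<alpha> C e n \<omega> = (\<Sum>k\<in>{1..n}. \<Sum>l\<in>{1..n}. q n k l * (e k \<omega> * e l \<omega>))"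
proof -
  have "sigma_hat \<eta> \<alpha> C e n \<omega> = (1 / real n) * (\<Sum>i\<in>{1..n}. \<Sum>j\<in>{1..n}. Bm i j * (Xseq \<eta> \<alpha> e i \<omega> * Xseq \<eta> \<alpha> e j \<omega>))"
  proof -
    have "(\<Sum>i\<in>{1..n}. (Xseq \<eta> \<alpha> e i \<omega>)\<^sup>2 + 2 * Xseq \<eta> \<alpha> e i \<omega> * Wsum \<eta> \<alpha> C e i \<omega>)
       = (\<Sum>i\<in>{1..n}. \<Sum>j\<in>{1..n}. Bm i j * (Xseq \<eta> \<alpha> e i \<omega> * Xseq \<eta> \<alpha> e j \<omega>))"
      by (rule sum.cong[OF refl], rule term_rep, auto)
    then show ?thesis unfolding sigma_hat_def by simp
  qed
  also have "(\<Sum>i\<in>{1..n}. \<Sum>j\<in>{1..n}. Bm i j * (Xseq \<eta> \<alpha> e i \<omega> * Xseq \<eta> \<alpha> e j \<omega>))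
     = (\<Sum>i\<in>{1..n}. \<Sum>j\<in>{1..n}. \<Sum>k\<in>{1..n}. \<Sum>l\<in>{1..n}. Bm i j * a i k * a j l * (e k \<omega> * e l \<omega>))"
  proof (intro sum.cong refl)
    fix i j assume ij: "i \<in> {1..n}" "j \<in> {1..n}"
    then have "Xseq \<eta> \<alpha> e i \<omega> * Xseq \<eta> \<alpha> e j \<omega> = (\<Sum>k\<in>{1..n}. \<Sum>l\<in>{1..n}. a i k * a j l * (e k \<omega> * e l \<omega>))"
      by (intro XX) auto
    then show "Bm i j * (Xseq \<eta> \<alpha> e i \<omega> * Xseq \<eta> \<alpha> e j \<omega>) = (\<Sum>k\<in>{1..n}. \<Sum>l\<in>{1..n}. Bm i j * a i k * a j l * (e k \<omega> * e l \<omega>))"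
      by (simp add: sum_distrib_left mult_ac)
  qed
  also have "\<dots> = (\<Sum>k\<in>{1..n}. \<Sum>l\<in>{1..n}. \<Sum>i\<in>{1..n}. \<Sum>j\<in>{1..n}. Bm i j * a i k * a j l * (e k \<omega> * e l \<omega>))"
    by (rule swap4)
  also have "(1 / real n) * \<dots> = (\<Sum>k\<in>{1..n}. \<Sum>l\<in>{1..n}. q n k l * (e k \<omega> * e l \<omega>))"
    unfolding q_def by (simp add: sum_distrib_left sum_distrib_right mult_ac)
  finally show ?thesis .
qed

definition v :: "nat \<Rightarrow> nat \<Rightarrow> real" where
  "v n k = sqrt (real n) / real n * (\<Sum>i\<in>{1..n}. a i k)"

lemma Yrep: "sqrt (real n) * Xbar \<eta> \<alpha> e n \<omega> = (\<Sum>k\<in>{1..n}. v n k * e k \<omega>)"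
proof -
  have "(\<Sum>i\<in>{1..n}. Xseq \<eta> \<alpha> e i \<omega>) = (\<Sum>i\<in>{1..n}. \<Sum>k\<in>{1..n}. a i k * e k \<omega>)"
    by (rule sum.cong[OF refl], rule Xrep_n, simp)
  also have "\<dots> = (\<Sum>k\<in>{1..n}. \<Sum>i\<in>{1..n}. a i k * e k \<omega>)" by (rule sum.swap)
  finally show ?thesis unfolding Xbar_def v_def
    by (simp add: sum_distrib_left sum_distrib_right mult_ac)
qed

lemma v_sq: "(\<Sum>k\<in>{1..n}. v n k * v n k) = (1 / real n) * (\<Sum>i\<in>{1..n}. \<Sum>j\<in>{1..n}. G n i j)"
proof -
  have "v n k * v n k = (1 / real n) * (\<Sum>i\<in>{1..n}. \<Sum>j\<in>{1..n}. a i k * a j k)" for k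
  proof -
    have "sqrt (real n) / real n * (sqrt (real n) / real n) = 1 / real n"
      by (cases "n = 0") (simp_all add: field_simps)
    moreover have "v n k * v n k = (sqrt (real n) / real n * (sqrt (real n) / real n)) * ((\<Sum>i\<in>{1..n}. a i k) * (\<Sum>i\<in>{1..n}. a i k))"
      unfolding v_def by (simp only: mult_ac)
    moreover have "(\<Sum>i\<in>{1..n}. a i k) * (\<Sum>i\<in>{1..n}. a i k) = (\<Sum>i\<in>{1..n}. \<Sum>j\<in>{1..n}. a i k * a j k)"
      by (rule sum_product)
    ultimately show ?thesis by simp
  qed
  then have "(\<Sum>k\<in>{1..n}. v n k * v n k) = (1 / real n) * (\<Sum>k\<in>{1..n}. \<Sum>i\<in>{1..n}. \<Sum>j\<in>{1..n}. a i k * a j k)"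
    by (simp add: sum_distrib_left)
  also have "(\<Sum>k\<in>{1..n}. \<Sum>i\<in>{1..n}. \<Sum>j\<in>{1..n}. a i k * a j k) = (\<Sum>i\<in>{1..n}. \<Sum>k\<in>{1..n}. \<Sum>j\<in>{1..n}. a i k * a j k)"
    by (rule sum.swap)
  also have "\<dots> = (\<Sum>i\<in>{1..n}. \<Sum>j\<in>{1..n}. \<Sum>k\<in>{1..n}. a i k * a j k)"
    by (rule sum.cong[OF refl], rule sum.swap)
  finally show ?thesis unfolding G_def .
qed

lemma q_trace: "(\<Sum>k\<in>{1..n}. q n k k) = (1 / real n) * (\<Sum>i\<in>{1..n}. \<Sum>j\<in>{1..n}. Bm i j * G n i j)"
proof -
  have "(\<Sum>k\<in>{1..n}. q n k k) = (1 / real n) * (\<Sum>k\<in>{1..n}. \<Sum>i\<in>{1..n}. \<Sum>j\<in>{1..n}. Bm i j * a i k * a j k)"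
    unfolding q_def by (simp add: sum_distrib_left)
  also have "(\<Sum>k\<in>{1..n}. \<Sum>i\<in>{1..n}. \<Sum>j\<in>{1..n}. Bm i j * a i k * a j k) = (\<Sum>i\<in>{1..n}. \<Sum>k\<in>{1..n}. \<Sum>j\<in>{1..n}. Bm i j * a i k * a j k)"
    by (rule sum.swap)
  also have "\<dots> = (\<Sum>i\<in>{1..n}. \<Sum>j\<in>{1..n}. \<Sum>k\<in>{1..n}. Bm i j * a i k * a j k)"
    by (rule sum.cong[OF refl], rule sum.swap)
  also have "\<dots> = (\<Sum>i\<in>{1..n}. \<Sum>j\<in>{1..n}. Bm i j * G n i j)"
    unfolding G_def by (simp add: sum_distrib_left mult.assoc)
  finally show ?thesis .
qed

end



locale setting = sgd + iid
begin

lemma sq_lin: "(\<Sum>k\<in>A. f k * (x k::real))^2 = (\<Sum>k\<in>A. \<Sum>l\<in>A. (f k * f l) * (x k * x l))"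
proof -
  have "(\<Sum>k\<in>A. f k * x k)^2 = (\<Sum>k\<in>A. \<Sum>l\<in>A. (f k * x k) * (f l * x l))"
    by (simp add: power2_eq_square sum_product)
  also have "\<dots> = (\<Sum>k\<in>A. \<Sum>l\<in>A. (f k * f l) * (x k * x l))"
    by (simp only: mult_ac)
  finally show ?thesis .
qed

lemma var_eq:
  "variance (\<lambda>\<omega>. sqrt (real n) * Xbar \<eta> \<alpha> e n \<omega>) = mu 2 * (\<Sum>k\<in>{1..n}. v n k * v n k)"
proof -
  have Y: "(\<lambda>\<omega>. sqrt (real n) * Xbar \<eta> \<alpha> e n \<omega>) = (\<lambda>\<omega>. \<Sum>k\<in>{1..n}. v n k * e k \<omega>)"
    by (rule ext) (rule Yrep)
  have A: "finite {1..n}" "\<And>k. k \<in> {1..n} \<Longrightarrow> 1 \<le> k" by auto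
  have "expectation (\<lambda>\<omega>. \<Sum>k\<in>{1..n}. v n k * e k \<omega>) = (\<Sum>k\<in>{1..n}. v n k * expectation (e k))"
    using e_int by (simp add: Bochner_Integration.integral_sum integrable_mult_right)
  also have "\<dots> = 0" using e_int by simp
  finally have E0: "expectation (\<lambda>\<omega>. \<Sum>k\<in>{1..n}. v n k * e k \<omega>) = 0" .
  have "variance (\<lambda>\<omega>. sqrt (real n) * Xbar \<eta> \<alpha> e n \<omega>)
      = expectation (\<lambda>\<omega>. (\<Sum>k\<in>{1..n}. \<Sum>l\<in>{1..n}. (v n k * v n l) * (e k \<omega> * e l \<omega>)))"
    by (simp only: Yrep E0 diff_zero sq_lin)
  also have "\<dots> = mu 2 * (\<Sum>k\<in>{1..n}. v n k * v n k)"
    by (rule quad(2)[OF A])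
  finally show ?thesis .
qed

lemma bias_eq:
  "mu 2 * (\<Sum>k\<in>{1..n}. q n k k) - mu 2 * (\<Sum>k\<in>{1..n}. v n k * v n k)
     = mu 2 / real n * (\<Sum>i\<in>{1..n}. \<Sum>j\<in>{1..n}. (Bm i j - 1) * G n i j)"
  unfolding q_trace v_sq by (simp add: sum_subtractf left_diff_distrib right_diff_distrib)

lemma Q3_le: "(\<Sum>k\<in>A. \<Sum>l\<in>A. (f k l::real) * f l k) \<le> (\<Sum>k\<in>A. \<Sum>l\<in>A. (f k l)^2)"
proof -
  have "2 * (\<Sum>k\<in>A. \<Sum>l\<in>A. f k l * f l k) = (\<Sum>k\<in>A. \<Sum>l\<in>A. 2 * (f k l * f l k))"
    by (simp add: sum_distrib_left)
  also have "\<dots> \<le> (\<Sum>k\<in>A. \<Sum>l\<in>A. (f k l)^2 + (f l k)^2)"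
  proof (intro sum_mono)
    fix k l
    have "0 \<le> (f k l - f l k)^2" by simp
    then show "2 * (f k l * f l k) \<le> (f k l)^2 + (f l k)^2" by (simp add: power2_diff)
  qed
  also have "\<dots> = (\<Sum>k\<in>A. \<Sum>l\<in>A. (f k l)^2) + (\<Sum>k\<in>A. \<Sum>l\<in>A. (f l k)^2)"
    by (simp add: sum.distrib)
  also have "(\<Sum>k\<in>A. \<Sum>l\<in>A. (f l k)^2) = (\<Sum>k\<in>A. \<Sum>l\<in>A. (f k l)^2)" by (rule sum.swap)
  finally show ?thesis by simp
qed

lemma D_le: "finite A \<Longrightarrow> (\<Sum>k\<in>A. (f k k::real)^2) \<le> (\<Sum>k\<in>A. \<Sum>l\<in>A. (f k l)^2)"
  by (intro sum_mono member_le_sum) auto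

definition W :: real where "W = 2 * mu 2^2 + \<bar>mu 4 - 3 * mu 2^2\<bar>"
definition Kfin :: real where "Kfin = (mu 2^2 * Kb^2 + W * Kq) / ln 2 + W * Kq * C"

lemma Kb_nonneg: "0 \<le> Kb"
  unfolding Kb_def Kb0_def using alpha_gt c1_pos by simp

lemma Kq_nonneg: "0 \<le> Kq"
  unfolding Kq_def by simp

lemma W_nonneg: "0 \<le> W" unfolding W_def by simp

lemma main_bound:
  assumes n: "2 \<le> n"
  shows "integrable M (\<lambda>\<omega>. (sigma_hat \<eta> \<alpha> C e n \<omega> - variance (\<lambda>\<omega>. sqrt (real n) * Xbar \<eta> \<alpha> e n \<omega>))\<^sup>2)
    \<and> expectation (\<lambda>\<omega>. (sigma_hat \<eta> \<alpha> C e n \<omega> - variance (\<lambda>\<omega>. sqrt (real n) * Xbar \<eta> \<alpha> e n \<omega>))\<^sup>2)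
      \<le> Kfin * real n powr (\<alpha> - 1) * ln (real n)"
proof -
  have n1: "1 \<le> n" using n by simp
  have A: "finite {1..n}" "\<And>k. k \<in> {1..n} \<Longrightarrow> 1 \<le> k" by auto
  define c where "c = variance (\<lambda>\<omega>. sqrt (real n) * Xbar \<eta> \<alpha> e n \<omega>)"
  have c: "c = mu 2 * (\<Sum>k\<in>{1..n}. v n k * v n k)" unfolding c_def by (rule var_eq)
  define Z where "Z \<omega> = (\<Sum>k\<in>{1..n}. \<Sum>l\<in>{1..n}. q n k l * (e k \<omega> * e l \<omega>))" for \<omega>
  have iZ: "integrable M Z" unfolding Z_def by (rule quad(1)[OF A])
  have iZ2: "integrable M (\<lambda>\<omega>. (Z \<omega>)^2)" unfolding Z_def by (rule quad(3)[OF A])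
  define T where "T = (\<Sum>k\<in>{1..n}. q n k k)"
  define Q2 where "Q2 = (\<Sum>k\<in>{1..n}. \<Sum>l\<in>{1..n}. (q n k l)^2)"
  define Q3 where "Q3 = (\<Sum>k\<in>{1..n}. \<Sum>l\<in>{1..n}. q n k l * q n l k)"
  define D where "D = (\<Sum>k\<in>{1..n}. (q n k k)^2)"
  have EZ: "expectation Z = mu 2 * T" unfolding Z_def T_def by (rule quad(2)[OF A])
  have EZ2: "expectation (\<lambda>\<omega>. (Z \<omega>)^2) = mu 2^2 * (T^2 + Q2 + Q3) + (mu 4 - 3 * mu 2^2) * D"
    unfolding Z_def T_def Q2_def Q3_def D_def by (rule quad(4)[OF A])
  have feq: "(\<lambda>\<omega>. (sigma_hat \<eta> \<alpha> C e n \<omega> - c)\<^sup>2) = (\<lambda>\<omega>. ((Z \<omega>)^2 + c^2) - (2 * c) * Z \<omega>)"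
    by (rule ext) (simp add: shat_rep[OF n1] Z_def power2_diff algebra_simps)
  have i1: "integrable M (\<lambda>\<omega>. (Z \<omega>)^2 + c^2)" using iZ2 by simp
  have i2: "integrable M (\<lambda>\<omega>. (2 * c) * Z \<omega>)" using iZ by simp
  have INT: "integrable M (\<lambda>\<omega>. (sigma_hat \<eta> \<alpha> C e n \<omega> - c)\<^sup>2)"
    unfolding feq using i1 i2 by simp
  have "expectation (\<lambda>\<omega>. (sigma_hat \<eta> \<alpha> C e n \<omega> - c)\<^sup>2)
      = expectation (\<lambda>\<omega>. (Z \<omega>)^2 + c^2) - expectation (\<lambda>\<omega>. (2 * c) * Z \<omega>)"
    unfolding feq by (rule Bochner_Integration.integral_diff[OF i1 i2])
  also have "expectation (\<lambda>\<omega>. (Z \<omega>)^2 + c^2) = expectation (\<lambda>\<omega>. (Z \<omega>)^2) + c^2"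
    using iZ2 by (simp add: prob_space)
  also have "expectation (\<lambda>\<omega>. (2 * c) * Z \<omega>) = 2 * c * expectation Z" by simp
  finally have E: "expectation (\<lambda>\<omega>. (sigma_hat \<eta> \<alpha> C e n \<omega> - c)\<^sup>2)
      = (mu 2 * T - c)^2 + mu 2^2 * (Q2 + Q3) + (mu 4 - 3 * mu 2^2) * D"
    unfolding EZ EZ2 by (simp add: power2_eq_square algebra_simps)
  define P where "P = real n powr (\<alpha> - 1)"
  define Lg where "Lg = ln (real n)"
  have np: "0 < real n" using n by simp
  have P0: "0 < P" unfolding P_def using np by simp
  have P1: "P \<le> 1" unfolding P_def
    using powr_mono[of "\<alpha> - 1" 0 "real n"] n alpha_lt by simp
  have Lg2: "ln 2 \<le> Lg" unfolding Lg_def using n by simp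
  have ln2: "0 < (ln 2::real)" by simp
  have Q3le: "Q3 \<le> Q2" unfolding Q3_def Q2_def by (rule Q3_le)
  have Dle: "D \<le> Q2" unfolding D_def Q2_def by (rule D_le) simp
  have D0: "0 \<le> D" unfolding D_def by (simp add: sum_nonneg)
  have "(mu 4 - 3 * mu 2^2) * D \<le> \<bar>mu 4 - 3 * mu 2^2\<bar> * D"
    using D0 by (intro mult_right_mono) auto
  also have "\<dots> \<le> \<bar>mu 4 - 3 * mu 2^2\<bar> * Q2" using Dle by (intro mult_left_mono) auto
  finally have kD: "(mu 4 - 3 * mu 2^2) * D \<le> \<bar>mu 4 - 3 * mu 2^2\<bar> * Q2" .
  have m2Q: "mu 2^2 * (Q2 + Q3) \<le> mu 2^2 * (2 * Q2)" using Q3le by (intro mult_left_mono) auto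
  have E1: "expectation (\<lambda>\<omega>. (sigma_hat \<eta> \<alpha> C e n \<omega> - c)\<^sup>2) \<le> (mu 2 * T - c)^2 + W * Q2"
    unfolding E W_def using kD m2Q by (simp add: algebra_simps)
  have b: "mu 2 * T - c = mu 2 / real n * (\<Sum>i\<in>{1..n}. \<Sum>j\<in>{1..n}. (Bm i j - 1) * G n i j)"
    unfolding T_def c by (rule bias_eq)
  have "\<bar>mu 2 * T - c\<bar> = \<bar>mu 2\<bar> / real n * \<bar>\<Sum>i\<in>{1..n}. \<Sum>j\<in>{1..n}. (Bm i j - 1) * G n i j\<bar>"
    unfolding b using np by (simp add: abs_mult)
  also have "\<dots> \<le> \<bar>mu 2\<bar> / real n * (Kb * real n powr \<alpha>)"
    by (intro mult_left_mono bias_bound[OF n1]) (use np in simp)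
  also have "\<dots> = \<bar>mu 2\<bar> * Kb * P"
    unfolding P_def using np by (simp add: powr_diff field_simps)
  finally have babs: "\<bar>mu 2 * T - c\<bar> \<le> \<bar>mu 2\<bar> * Kb * P" .
  have "(mu 2 * T - c)^2 = \<bar>mu 2 * T - c\<bar>^2" by simp
  also have "\<dots> \<le> (\<bar>mu 2\<bar> * Kb * P)^2" by (rule power_mono[OF babs]) simp
  also have "\<dots> = mu 2^2 * Kb^2 * (P * P)" by (simp add: power2_eq_square)
  also have "\<dots> \<le> mu 2^2 * Kb^2 * P"
    using P0 P1 by (intro mult_left_mono) (auto simp: mult_le_cancel_right1)
  finally have bsq: "(mu 2 * T - c)^2 \<le> mu 2^2 * Kb^2 * P" .
  have "1 / real n \<le> P"
  proof -
    have "real n powr (-1) \<le> real n powr (\<alpha> - 1)"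
      by (rule powr_mono) (use n alpha_gt in auto)
    then show ?thesis unfolding P_def using np by (simp add: powr_minus divide_inverse)
  qed
  have "Q2 \<le> Kq * (1 / real n + C * P * Lg)"
    unfolding Q2_def P_def Lg_def by (rule q_frob[OF n1])
  also have "\<dots> \<le> Kq * (P + C * P * Lg)"
    using \<open>1 / real n \<le> P\<close> Kq_nonneg by (intro mult_left_mono) auto
  finally have Q2b: "Q2 \<le> Kq * (P + C * P * Lg)" .
  have "expectation (\<lambda>\<omega>. (sigma_hat \<eta> \<alpha> C e n \<omega> - c)\<^sup>2) \<le> mu 2^2 * Kb^2 * P + W * (Kq * (P + C * P * Lg))"
    using E1 bsq mult_left_mono[OF Q2b W_nonneg] by linarith
  also have "\<dots> = (mu 2^2 * Kb^2 + W * Kq) * P + W * Kq * C * (P * Lg)"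
    by (simp add: algebra_simps)
  also have "(mu 2^2 * Kb^2 + W * Kq) * P \<le> (mu 2^2 * Kb^2 + W * Kq) * (P * Lg / ln 2)"
  proof (rule mult_left_mono)
    have "P * 1 \<le> P * (Lg / ln 2)" using P0 Lg2 ln2 by (intro mult_left_mono) (auto simp: field_simps)
    then show "P \<le> P * Lg / ln 2" by simp
    show "0 \<le> mu 2^2 * Kb^2 + W * Kq" using W_nonneg Kq_nonneg by simp
  qed
  also have "(mu 2^2 * Kb^2 + W * Kq) * (P * Lg / ln 2) + W * Kq * C * (P * Lg) = Kfin * P * Lg"
    unfolding Kfin_def by (simp add: field_simps)
  finally have "expectation (\<lambda>\<omega>. (sigma_hat \<eta> \<alpha> C e n \<omega> - c)\<^sup>2) \<le> Kfin * P * Lg" by simp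
  then show ?thesis using INT unfolding c_def P_def Lg_def by simp
qed

end

theorem corollaryC1:
  fixes M :: "'a measure" and e :: "nat \<Rightarrow> 'a \<Rightarrow> real"
    and \<eta> \<alpha> C :: real
  assumes "prob_space M"
    and "\<eta> > 0" and "1/2 < \<alpha>" and "\<alpha> < 1" and "\<eta> * C > 1"
    and "\<And>i. i \<ge> 1 \<Longrightarrow> e i \<in> borel_measurable M"
    and "prob_space.indep_vars M (\<lambda>_. borel) e {1..}"
    and "\<And>i. i \<ge> 1 \<Longrightarrow> distr M borel (e i) = distr M borel (e 1)"
    and "\<And>i. i \<ge> 1 \<Longrightarrow> integrable M (e i) \<and> prob_space.expectation M (e i) = 0"
    and "integrable M (\<lambda>\<omega>. (e 1 \<omega>) ^ 4)"
  shows "\<exists>K. \<forall>n\<ge>2.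
           integrable M (\<lambda>\<omega>. (sigma_hat \<eta> \<alpha> C e n \<omega>
               - prob_space.variance M (\<lambda>\<omega>. sqrt (real n) * Xbar \<eta> \<alpha> e n \<omega>))\<^sup>2)
         \<and> prob_space.expectation M (\<lambda>\<omega>. (sigma_hat \<eta> \<alpha> C e n \<omega>
               - prob_space.variance M (\<lambda>\<omega>. sqrt (real n) * Xbar \<eta> \<alpha> e n \<omega>))\<^sup>2)
             \<le> K * real n powr (\<alpha> - 1) * ln (real n)"
proof -
  have S: "sgd \<eta> \<alpha> C" by (rule sgd.intro[OF assms(2) assms(3) assms(4) assms(5)])
  have ax: "iid_axioms M e"
    by (rule iid_axioms.intro[OF assms(6) assms(7) assms(8) assms(9) assms(10)])
  have I: "iid M e" by (rule iid.intro[OF assms(1) ax])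
  interpret setting \<eta> \<alpha> C M e by (rule setting.intro[OF S I])
  show ?thesis
    by (intro exI[of _ Kfin] allI impI) (rule main_bound)
qed

end
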